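(* Let $\mathbb U=\{z\in\mathbb C:|z|<1\}$, let $\psi\in H^2(\mathbb U)$ and let $\phi:\mathbb U\to\mathbb U$ be analytic with $\|\phi\|_\infty=\sup_{z\in\mathbb U}|\phi(z)|<1$. Then the weighted composition operator $T_{\psi,\phi}f=\psi\cdot(f\circ\phi)$ and the composition operator $C_\phi f=f\circ\phi$ are nuclear (trace class) on $H^2(\mathbb U)$, and \[ \|T_{\psi,\phi}\|_1\le\frac{\|\psi\|_{H^2(\mathbb U)}}{1-\|\phi\|_\infty}. \]
   Context: $H^2(\mathbb U)$ is the Hardy space of holomorphic $f$ on $\mathbb U$ with $\|f\|_{H^2(\mathbb U)}=\sup_{0\le r<1}\bigl(\frac1{2\pi}\int_0^{2\pi}|f(re^{it})|^2dt\bigr)^{1/2}<\infty$. $\|T\|_1=\mathrm{tr}(\sqrt{T^*T})$ denotes the trace norm. *)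

theory Defs
  imports "HOL-Complex_Analysis.Complex_Analysis"
begin

definition unit_disc :: "complex set" where
  "unit_disc = ball 0 1"

definition int_mean :: "(complex \<Rightarrow> complex) \<Rightarrow> real \<Rightarrow> real" where
  "int_mean f r = (1 / (2 * pi)) * integral {0..2*pi} (\<lambda>t. (cmod (f (of_real r * cis t)))^2)"

definition hardy2 :: "(complex \<Rightarrow> complex) \<Rightarrow> bool" where
  "hardy2 f \<longleftrightarrow> f holomorphic_on unit_disc \<and> bdd_above (int_mean f ` {0..<1})"

definition H2_norm :: "(complex \<Rightarrow> complex) \<Rightarrow> real" where
  "H2_norm f = sqrt (SUP r\<in>{0..<1}. int_mean f r)"

text \<open>Canonical representatives of elements of H^2: extended by 0 outside U.\<close>
definition H2 :: "(complex \<Rightarrow> complex) set" where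
  "H2 = {f. hardy2 f \<and> (\<forall>z. z \<notin> unit_disc \<longrightarrow> f z = 0)}"

text \<open>Inner product of H^2 obtained from the norm by polarization
  (linear in the first argument).\<close>
definition H2_inner :: "(complex \<Rightarrow> complex) \<Rightarrow> (complex \<Rightarrow> complex) \<Rightarrow> complex" where
  "H2_inner f g = (1/4) * (\<Sum>k<(4::nat). \<i>^k * complex_of_real ((H2_norm (\<lambda>z. f z + \<i>^k * g z))^2))"

type_synonym H2op = "(complex \<Rightarrow> complex) \<Rightarrow> (complex \<Rightarrow> complex)"

definition H2_linear :: "H2op \<Rightarrow> bool" where
  "H2_linear T \<longleftrightarrow> (\<forall>f\<in>H2. T f \<in> H2) \<and>
     (\<forall>f\<in>H2. \<forall>g\<in>H2. T (\<lambda>z. f z + g z) = (\<lambda>z. T f z + T g z)) \<and>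
     (\<forall>f\<in>H2. \<forall>c. T (\<lambda>z. c * f z) = (\<lambda>z. c * T f z))"

definition H2_bounded_linear :: "H2op \<Rightarrow> bool" where
  "H2_bounded_linear T \<longleftrightarrow> H2_linear T \<and> (\<exists>K. \<forall>f\<in>H2. H2_norm (T f) \<le> K * H2_norm f)"

definition H2_adjoint :: "H2op \<Rightarrow> H2op \<Rightarrow> bool" where
  "H2_adjoint T S \<longleftrightarrow> (\<forall>g\<in>H2. S g \<in> H2) \<and>
     (\<forall>f\<in>H2. \<forall>g\<in>H2. H2_inner (T f) g = H2_inner f (S g))"

definition H2_pos_sqrt :: "H2op \<Rightarrow> H2op \<Rightarrow> bool" where
  "H2_pos_sqrt A P \<longleftrightarrow> H2_linear P \<and>
     (\<forall>f\<in>H2. Im (H2_inner (P f) f) = 0 \<and> Re (H2_inner (P f) f) \<ge> 0) \<and>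
     (\<forall>f\<in>H2. P (P f) = A f)"

definition H2_basis :: "nat \<Rightarrow> complex \<Rightarrow> complex" where
  "H2_basis n = (\<lambda>z. if z \<in> unit_disc then z ^ n else 0)"

text \<open>Trace class (nuclear): tr(sqrt(T^* T)) < infinity, trace computed in the basis z^n.\<close>
definition trace_class :: "H2op \<Rightarrow> bool" where
  "trace_class T \<longleftrightarrow> H2_bounded_linear T \<and>
     (\<exists>S P. H2_adjoint T S \<and> H2_pos_sqrt (S \<circ> T) P \<and>
        summable (\<lambda>n. Re (H2_inner (P (H2_basis n)) (H2_basis n))))"

definition trace_norm :: "H2op \<Rightarrow> real" where
  "trace_norm T = (THE x. \<exists>S P. H2_adjoint T S \<and> H2_pos_sqrt (S \<circ> T) P \<and>
        (\<lambda>n. Re (H2_inner (P (H2_basis n)) (H2_basis n))) sums x)"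

definition wcomp_op :: "(complex \<Rightarrow> complex) \<Rightarrow> (complex \<Rightarrow> complex) \<Rightarrow> H2op" where
  "wcomp_op \<psi> \<phi> f = (\<lambda>z. if z \<in> unit_disc then \<psi> z * f (\<phi> z) else 0)"

definition comp_op :: "(complex \<Rightarrow> complex) \<Rightarrow> H2op" where
  "comp_op \<phi> f = (\<lambda>z. if z \<in> unit_disc then f (\<phi> z) else 0)"

end

theory Submission
  imports Defs
begin


definition sqs :: "(nat \<Rightarrow> complex) \<Rightarrow> bool" where
  "sqs a \<longleftrightarrow> summable (\<lambda>n. (cmod (a n))^2)"

lemma two_sq_ineq: "((x::real) + y)^2 \<le> 2*x^2 + 2*y^2"
proof -
  have "0 \<le> (x - y)^2" by simp
  thus ?thesis by (simp add: power2_eq_square algebra_simps)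
qed

lemma prod_sq_ineq: "(x::real) * y \<le> (x^2 + y^2) / 2"
proof -
  have "0 \<le> (x - y)^2" by simp
  thus ?thesis by (simp add: power2_eq_square algebra_simps)
qed

lemma sqs_add: assumes "sqs a" "sqs b" shows "sqs (\<lambda>n. a n + b n)"
  unfolding sqs_def
proof (rule summable_comparison_test')
  show "summable (\<lambda>n. 2*(cmod (a n))^2 + 2*(cmod (b n))^2)"
    using assms unfolding sqs_def by (intro summable_add summable_mult)
  fix n
  have "cmod (a n + b n) \<le> cmod (a n) + cmod (b n)" by (rule norm_triangle_ineq)
  hence "(cmod (a n + b n))^2 \<le> (cmod (a n) + cmod (b n))^2" by (simp add: power_mono)
  also have "\<dots> \<le> 2*(cmod (a n))^2 + 2*(cmod (b n))^2" by (rule two_sq_ineq)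
  finally show "norm ((cmod (a n + b n))^2) \<le> 2*(cmod (a n))^2 + 2*(cmod (b n))^2" by simp
qed

lemma sqs_scale: assumes "sqs a" shows "sqs (\<lambda>n. c * a n)"
  using summable_mult[OF assms[unfolded sqs_def], of "(cmod c)^2"]
  by (simp add: sqs_def norm_mult power_mult_distrib)

lemma sqs_uminus: assumes "sqs a" shows "sqs (\<lambda>n. - a n)"
  using assms by (simp add: sqs_def)

lemma sqs_prod_abs: assumes "sqs a" "sqs b" shows "summable (\<lambda>n. cmod (a n * cnj (b n)))"
proof (rule summable_comparison_test')
  show "summable (\<lambda>n. ((cmod (a n))^2 + (cmod (b n))^2)/2)"
    using assms unfolding sqs_def by (intro summable_add summable_divide)
  fix n show "norm (cmod (a n * cnj (b n))) \<le> ((cmod (a n))^2 + (cmod (b n))^2)/2"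
    using prod_sq_ineq[of "cmod (a n)" "cmod (b n)"] by (simp add: norm_mult)
qed

lemma sqs_prod: assumes "sqs a" "sqs b" shows "summable (\<lambda>n. a n * cnj (b n))"
  using summable_norm_cancel[OF sqs_prod_abs[OF assms]] .

lemma ip_commute: assumes "sqs a" "sqs b"
  shows "Re (\<Sum>n. a n * cnj (b n)) = Re (\<Sum>n. b n * cnj (a n))"
proof -
  have "(\<lambda>n. b n * cnj (a n)) sums (\<Sum>n. b n * cnj (a n))"
    by (rule summable_sums[OF sqs_prod[OF assms(2,1)]])
  hence "(\<lambda>n. cnj (b n * cnj (a n))) sums cnj (\<Sum>n. b n * cnj (a n))"
    by (simp only: sums_cnj)
  hence "(\<Sum>n. a n * cnj (b n)) = cnj (\<Sum>n. b n * cnj (a n))"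
    by (simp add: sums_iff mult.commute)
  thus ?thesis by simp
qed
lemma ip_add: assumes "sqs a" "sqs b" "sqs c"
  shows "(\<Sum>n. (a n + b n) * cnj (c n)) = (\<Sum>n. a n * cnj (c n)) + (\<Sum>n. b n * cnj (c n))"
  using suminf_add[OF sqs_prod[OF assms(1,3)] sqs_prod[OF assms(2,3)]]
  by (simp add: distrib_right)
lemma ip_scale: assumes "sqs u" "sqs v"
  shows "(\<Sum>n. r * u n * cnj (v n)) = r * (\<Sum>n. u n * cnj (v n))"
  using suminf_mult[OF sqs_prod[OF assms], of r] by (simp add: mult.assoc)
lemma ip_self: assumes "sqs a" shows "(\<Sum>n. a n * cnj (a n)) = of_real (\<Sum>n. (cmod (a n))^2)"
proof -
  have "(\<Sum>n. a n * cnj (a n)) = (\<Sum>n. of_real ((cmod (a n))^2))"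
    by (simp only: complex_norm_square)
  also have "\<dots> = (of_real (\<Sum>n. (cmod (a n))^2) :: complex)"
    using assms unfolding sqs_def by (rule suminf_of_real[symmetric])
  finally show ?thesis .
qed
lemma ip_self_zero: assumes "sqs a" shows "(\<Sum>n. (cmod (a n))^2) = 0 \<longleftrightarrow> a = (\<lambda>_. 0)"
proof -
  have "(\<Sum>n. (cmod (a n))^2) = 0 \<longleftrightarrow> (\<forall>n. (cmod (a n))^2 = 0)"
    using assms unfolding sqs_def by (rule suminf_eq_zero_iff) simp
  moreover have "(\<forall>n. (cmod (a n))^2 = 0) \<longleftrightarrow> a = (\<lambda>_. 0)"
  proof
    assume "\<forall>n. (cmod (a n))^2 = 0" thus "a = (\<lambda>_. 0)" by (intro ext) simp
  qed simp
  ultimately show ?thesis by blast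
qed
lemma ip_nonneg: assumes "sqs a" shows "0 \<le> (\<Sum>n. (cmod (a n))^2)"
  using suminf_nonneg[of "\<lambda>n. (cmod (a n))^2"] assms unfolding sqs_def by simp

typedef ell2 = "{a::nat \<Rightarrow> complex. sqs a}"
  morphisms co Abs_ell2
  by (rule exI[of _ "\<lambda>_. 0"]) (simp add: sqs_def)

setup_lifting type_definition_ell2

lemma sqs_co [simp]: "sqs (co x)" using co by simp

lemma ell2_eqI: "(\<And>n. co x n = co y n) \<Longrightarrow> x = y"
  by (metis co_inject ext)

instantiation ell2 :: real_vector
begin
lift_definition zero_ell2 :: ell2 is "\<lambda>_. 0" by (simp add: sqs_def)
lift_definition plus_ell2 :: "ell2 \<Rightarrow> ell2 \<Rightarrow> ell2" is "\<lambda>a b n. a n + b n" by (rule sqs_add)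
lift_definition uminus_ell2 :: "ell2 \<Rightarrow> ell2" is "\<lambda>a n. - a n" by (rule sqs_uminus)
lift_definition minus_ell2 :: "ell2 \<Rightarrow> ell2 \<Rightarrow> ell2" is "\<lambda>a b n. a n - b n"
  unfolding diff_conv_add_uminus by (rule sqs_add, assumption, rule sqs_uminus)
lift_definition scaleR_ell2 :: "real \<Rightarrow> ell2 \<Rightarrow> ell2" is "\<lambda>r a n. of_real r * a n" by (rule sqs_scale)
instance
proof
  fix x y z :: ell2 and a b :: real
  show "x + y + z = x + (y + z)" by transfer (simp add: add.assoc)
  show "x + y = y + x" by transfer (simp add: add.commute)
  show "0 + x = x" by transfer simp
  show "- x + x = 0" by transfer simp
  show "x - y = x + - y" by transfer simp
  show "a *\<^sub>R (x + y) = a *\<^sub>R x + a *\<^sub>R y" by transfer (simp add: algebra_simps)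
  show "(a + b) *\<^sub>R x = a *\<^sub>R x + b *\<^sub>R x" by transfer (simp add: algebra_simps)
  show "a *\<^sub>R b *\<^sub>R x = (a * b) *\<^sub>R x" by transfer (simp add: algebra_simps)
  show "1 *\<^sub>R x = x" by transfer simp
qed
end

instantiation ell2 :: real_inner
begin
lift_definition norm_ell2 :: "ell2 \<Rightarrow> real" is "\<lambda>a. sqrt (\<Sum>n. (cmod (a n))^2)" .
lift_definition inner_ell2 :: "ell2 \<Rightarrow> ell2 \<Rightarrow> real" is "\<lambda>a b. Re (\<Sum>n. a n * cnj (b n))" .
definition dist_ell2 :: "ell2 \<Rightarrow> ell2 \<Rightarrow> real" where "dist_ell2 x y = norm (x - y)"
definition sgn_ell2 :: "ell2 \<Rightarrow> ell2" where "sgn_ell2 x = x /\<^sub>R norm x"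
definition uniformity_ell2 :: "(ell2 \<times> ell2) filter" where
  "uniformity_ell2 = (INF e\<in>{0 <..}. principal {(x, y). dist x y < e})"
definition open_ell2 :: "ell2 set \<Rightarrow> bool" where
  "open_ell2 U \<longleftrightarrow> (\<forall>x\<in>U. eventually (\<lambda>(x', y). x' = x \<longrightarrow> y \<in> U) uniformity)"
instance
proof
  fix x y z :: ell2 and a b :: real
  show "dist x y = norm (x - y)" by (simp add: dist_ell2_def)
  show "sgn x = x /\<^sub>R norm x" by (simp add: sgn_ell2_def)
  show "(uniformity :: (ell2 \<times> ell2) filter) = (INF e\<in>{0 <..}. principal {(x, y). dist x y < e})"
    by (simp add: uniformity_ell2_def)
  show "open U \<longleftrightarrow> (\<forall>x\<in>U. eventually (\<lambda>(x', y). x' = x \<longrightarrow> y \<in> U) uniformity)" for U :: "ell2 set"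
    by (simp add: open_ell2_def)
  show "inner x y = inner y x"
    by transfer (rule ip_commute)
  show "inner (x + y) z = inner x z + inner y z"
    by transfer (simp add: ip_add)
  show "inner (a *\<^sub>R x) y = a * inner x y"
    by transfer (simp add: ip_scale)
  show "0 \<le> inner x x"
    by transfer (simp add: ip_self ip_nonneg)
  show "inner x x = 0 \<longleftrightarrow> x = 0"
    by transfer (simp add: ip_self ip_self_zero)
  show "norm x = sqrt (inner x x)"
    by transfer (simp add: ip_self)
qed
end


lemma co_zero [simp]: "co 0 n = 0" by (simp add: zero_ell2.rep_eq)
lemma co_add [simp]: "co (x + y) n = co x n + co y n" by (simp add: plus_ell2.rep_eq)
lemma co_minus [simp]: "co (x - y) n = co x n - co y n" by (simp add: minus_ell2.rep_eq)
lemma co_uminus [simp]: "co (- x) n = - co x n" by (simp add: uminus_ell2.rep_eq)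
lemma co_scaleR [simp]: "co (r *\<^sub>R x) n = of_real r * co x n" by (simp add: scaleR_ell2.rep_eq)

lemma norm_ell2_co: "norm x = sqrt (\<Sum>n. (cmod (co x n))^2)" by (simp add: norm_ell2.rep_eq)
lemma summable_co: "summable (\<lambda>n. (cmod (co x n))^2)" using sqs_co[of x] unfolding sqs_def .
lemma norm_sq_co: "(norm x)^2 = (\<Sum>n. (cmod (co x n))^2)"
  unfolding norm_ell2_co using ip_nonneg[OF sqs_co[of x]] by simp

lift_definition cinner :: "ell2 \<Rightarrow> ell2 \<Rightarrow> complex" is "\<lambda>a b. \<Sum>n. a n * cnj (b n)" .
lift_definition cscale :: "complex \<Rightarrow> ell2 \<Rightarrow> ell2" is "\<lambda>c a n. c * a n" by (rule sqs_scale)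
lift_definition ket :: "nat \<Rightarrow> ell2" is "\<lambda>k n. if n = k then 1 else 0"
proof -
  fix k :: nat
  have "(\<lambda>n. (cmod (if n = k then (1::complex) else 0))^2) = (\<lambda>n. if n = k then 1 else 0)" by auto
  thus "sqs (\<lambda>n. if n = k then 1 else 0)" unfolding sqs_def
    using sums_single[of k "\<lambda>_. 1::real"] by (simp add: summable_def)
qed

lemma co_cscale [simp]: "co (cscale c x) n = c * co x n" by (simp add: cscale.rep_eq)
lemma co_ket: "co (ket k) n = (if n = k then 1 else 0)" by (simp add: ket.rep_eq)

lemma cinner_co: "cinner x y = (\<Sum>n. co x n * cnj (co y n))" by (simp add: cinner.rep_eq)
lemma summable_cinner: "summable (\<lambda>n. co x n * cnj (co y n))" by (rule sqs_prod) simp_all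

lemma cinner_add_left: "cinner (x + y) z = cinner x z + cinner y z"
  unfolding cinner_co co_add by (rule ip_add) simp_all
lemma cinner_scale_left: "cinner (cscale c x) y = c * cinner x y"
  unfolding cinner_co co_cscale by (rule ip_scale) simp_all
lemma cinner_commute: "cinner y x = cnj (cinner x y)"
proof -
  have "(\<lambda>n. co x n * cnj (co y n)) sums cinner x y" unfolding cinner_co
    by (rule summable_sums[OF summable_cinner])
  hence "(\<lambda>n. cnj (co x n * cnj (co y n))) sums cnj (cinner x y)" by (simp only: sums_cnj)
  hence "(\<lambda>n. co y n * cnj (co x n)) sums cnj (cinner x y)" by (simp add: mult.commute)
  thus ?thesis unfolding cinner_co by (simp add: sums_iff)
qed
lemma cinner_add_right: "cinner z (x + y) = cinner z x + cinner z y"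
  by (metis cinner_commute cinner_add_left complex_cnj_add)
lemma cinner_scale_right: "cinner x (cscale c y) = cnj c * cinner x y"
  by (metis cinner_commute cinner_scale_left complex_cnj_mult)
lemma cinner_self: "cinner x x = of_real ((norm x)^2)"
  unfolding cinner_co norm_sq_co by (rule ip_self) simp
lemma inner_cinner: "inner x y = Re (cinner x y)"
  by (simp add: inner_ell2.rep_eq cinner.rep_eq)
lemma cinner_zero_left [simp]: "cinner 0 y = 0"
  using cinner_add_left[of 0 0 y] by simp
lemma cinner_zero_right [simp]: "cinner y 0 = 0"
  using cinner_add_right[of y 0 0] by simp
lemma cinner_uminus_left: "cinner (- x) y = - cinner x y"
  using cinner_add_left[of x "-x" y] by (simp add: eq_neg_iff_add_eq_0 add.commute)
lemma cinner_diff_left: "cinner (x - y) z = cinner x z - cinner y z"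
  using cinner_add_left[of x "-y" z] cinner_uminus_left[of y z] by simp
lemma cinner_uminus_right: "cinner x (- y) = - cinner x y"
  using cinner_add_right[of x y "-y"] by (simp add: eq_neg_iff_add_eq_0 add.commute)
lemma cinner_diff_right: "cinner x (y - z) = cinner x y - cinner x z"
  using cinner_add_right[of x y "-z"] cinner_uminus_right[of x z] by simp
lemma cinner_scaleR_left: "cinner (r *\<^sub>R x) y = of_real r * cinner x y"
  unfolding cinner_co co_scaleR by (rule ip_scale) simp_all
lemma cinner_scaleR_right: "cinner x (r *\<^sub>R y) = of_real r * cinner x y"
  by (metis cinner_commute cinner_scaleR_left complex_cnj_mult complex_cnj_complex_of_real)
lemma cinner_sum_left: "cinner (\<Sum>i\<in>A. f i) y = (\<Sum>i\<in>A. cinner (f i) y)"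
  by (induct A rule: infinite_finite_induct) (simp_all add: cinner_add_left)
lemma cinner_sum_right: "cinner y (\<Sum>i\<in>A. f i) = (\<Sum>i\<in>A. cinner y (f i))"
  by (induct A rule: infinite_finite_induct) (simp_all add: cinner_add_right)

lemma cscale_add_right: "cscale c (x + y) = cscale c x + cscale c y"
  by (rule ell2_eqI) (simp add: distrib_left)
lemma cscale_add_left: "cscale (c + d) x = cscale c x + cscale d x"
  by (rule ell2_eqI) (simp add: distrib_right)
lemma cscale_cscale: "cscale c (cscale d x) = cscale (c * d) x"
  by (rule ell2_eqI) simp
lemma cscale_one [simp]: "cscale 1 x = x"
  by (rule ell2_eqI) simp
lemma cscale_zero [simp]: "cscale 0 x = 0" "cscale c 0 = 0"
  by (rule ell2_eqI, simp)+
lemma cscale_of_real: "cscale (of_real r) x = r *\<^sub>R x"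
  by (rule ell2_eqI) simp
lemma cscale_minus_right: "cscale c (x - y) = cscale c x - cscale c y"
  by (rule ell2_eqI) (simp add: right_diff_distrib)
lemma cscale_uminus_right: "cscale c (- x) = - cscale c x"
  by (rule ell2_eqI) simp

lemma norm_cscale: "norm (cscale c x) = cmod c * norm x"
proof -
  have "(norm (cscale c x))^2 = (\<Sum>n. (cmod c)^2 * (cmod (co x n))^2)"
    unfolding norm_sq_co by (simp add: norm_mult power_mult_distrib)
  also have "\<dots> = (cmod c)^2 * (norm x)^2"
    unfolding norm_sq_co by (rule suminf_mult[OF summable_co])
  also have "\<dots> = (cmod c * norm x)^2" by (simp add: power_mult_distrib)
  finally show ?thesis by (simp add: power2_eq_iff_nonneg)
qed

lemma norm_cinner: "cmod (cinner x y) \<le> norm x * norm y"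
proof (cases "cinner x y = 0")
  case True thus ?thesis by simp
next
  case False
  define c where "c = cnj (cinner x y) / of_real (cmod (cinner x y))"
  have cm: "cmod c = 1" using False by (simp add: c_def norm_divide)
  have "c * cinner x y = of_real ((cmod (cinner x y))^2) / of_real (cmod (cinner x y))"
    unfolding c_def complex_norm_square by (simp add: mult.commute)
  also have "\<dots> = of_real (cmod (cinner x y))" using False by (simp add: power2_eq_square)
  finally have "of_real (cmod (cinner x y)) = c * cinner x y" by simp
  hence "cmod (cinner x y) = Re (cinner (cscale c x) y)"
    unfolding cinner_scale_left by (metis Re_complex_of_real)
  also have "\<dots> = inner (cscale c x) y" by (simp add: inner_cinner)
  also have "\<dots> \<le> norm (cscale c x) * norm y" by (rule Cauchy_Schwarz_ineq2[THEN order_trans[OF abs_ge_self]])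
  also have "\<dots> = norm x * norm y" by (simp add: norm_cscale cm)
  finally show ?thesis .
qed

lemma cinner_ket: "cinner x (ket k) = co x k"
proof -
  have "(\<lambda>n. co x n * cnj (co (ket k) n)) sums co x k"
    using sums_single[of k "\<lambda>n. co x n"] by (simp add: co_ket if_distrib cong: if_cong)
  thus ?thesis unfolding cinner_co by (simp add: sums_iff)
qed

lemma ket_cinner: "cinner (ket k) x = cnj (co x k)"
  by (metis cinner_commute cinner_ket)

lemma norm_ket [simp]: "norm (ket k) = 1"
proof -
  have "cinner (ket k) (ket k) = 1" by (simp add: cinner_ket co_ket)
  hence "complex_of_real ((norm (ket k))^2) = 1" by (simp only: cinner_self)
  hence "(norm (ket k))^2 = 1" by (metis of_real_eq_1_iff)
  thus ?thesis by (simp add: power2_eq_1_iff) (smt (verit) norm_ge_zero)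
qed

lemma norm_co_le: "cmod (co x k) \<le> norm x"
  using norm_cinner[of x "ket k"] by (simp add: cinner_ket)

lemma cinner_eq_zero_imp: "(\<And>x. cinner x y = 0) \<Longrightarrow> y = 0"
  by (metis cinner_self norm_eq_zero of_real_eq_0_iff zero_eq_power2)

lemma cinner_ext: "(\<And>x. cinner x y = cinner x z) \<Longrightarrow> y = z"
  using cinner_eq_zero_imp[of "y - z"] by (simp add: cinner_diff_right)

lemma cinner_ext_left: "(\<And>y. cinner x y = cinner z y) \<Longrightarrow> x = z"
  by (metis cinner_commute cinner_ext)

lemma Re_cinner_self: "Re (cinner x x) = (norm x)^2"
  by (simp add: cinner_self)

instance ell2 :: complete_space
proof
  fix X :: "nat \<Rightarrow> ell2" assume X: "Cauchy X"
  define L where "L k = lim (\<lambda>m. co (X m) k)" for k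
  have coord: "(\<lambda>m. co (X m) k) \<longlonglongrightarrow> L k" for k
  proof -
    have "Cauchy (\<lambda>m. co (X m) k)"
    proof (rule CauchyI)
      fix e :: real assume "0 < e"
      from CauchyD[OF X this] obtain M where M: "\<forall>m\<ge>M. \<forall>n\<ge>M. norm (X m - X n) < e" by blast
      show "\<exists>M. \<forall>m\<ge>M. \<forall>n\<ge>M. norm (co (X m) k - co (X n) k) < e"
      proof (intro exI allI impI)
        fix m n assume "M \<le> m" "M \<le> n"
        have "norm (co (X m) k - co (X n) k) = cmod (co (X m - X n) k)" by simp
        also have "\<dots> \<le> norm (X m - X n)" by (rule norm_co_le)
        also have "\<dots> < e" using M \<open>M \<le> m\<close> \<open>M \<le> n\<close> by blast
        finally show "norm (co (X m) k - co (X n) k) < e" .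
      qed
    qed
    thus ?thesis unfolding L_def by (simp add: Cauchy_convergent_iff convergent_LIMSEQ_iff)
  qed
  have main: "\<exists>N. \<forall>m\<ge>N. summable (\<lambda>k. (cmod (co (X m) k - L k))^2) \<and>
                 (\<Sum>k. (cmod (co (X m) k - L k))^2) \<le> e^2" if e: "e > 0" for e
  proof -
    from CauchyD[OF X e] obtain N where N: "\<forall>m\<ge>N. \<forall>n\<ge>N. norm (X m - X n) < e" by blast
    show ?thesis
    proof (intro exI allI impI conjI)
      fix m assume m: "N \<le> m"
      have part: "(\<Sum>k<K. (cmod (co (X m) k - L k))^2) \<le> e^2" for K
      proof -
        have lim: "(\<lambda>n. \<Sum>k<K. (cmod (co (X m) k - co (X n) k))^2) \<longlonglongrightarrow> (\<Sum>k<K. (cmod (co (X m) k - L k))^2)"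
          by (intro tendsto_intros coord)
        have "(\<Sum>k<K. (cmod (co (X m) k - co (X n) k))^2) \<le> e^2" if n: "n \<ge> N" for n
        proof -
          have "(\<Sum>k<K. (cmod (co (X m) k - co (X n) k))^2) = (\<Sum>k<K. (cmod (co (X m - X n) k))^2)" by simp
          also have "\<dots> \<le> (\<Sum>k. (cmod (co (X m - X n) k))^2)"
            by (rule sum_le_suminf[OF summable_co]) auto
          also have "\<dots> = (norm (X m - X n))^2" by (simp add: norm_sq_co)
          also have "\<dots> \<le> e^2" using N m n by (intro power_mono) (auto intro: less_imp_le)
          finally show ?thesis .
        qed
        thus ?thesis using lim by (intro LIMSEQ_le_const2[OF lim]) blast
      qed
      show "summable (\<lambda>k. (cmod (co (X m) k - L k))^2)"
        by (rule summableI_nonneg_bounded[OF _ part]) simp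
      thus "(\<Sum>k. (cmod (co (X m) k - L k))^2) \<le> e^2"
        by (rule suminf_le_const) (rule part)
    qed
  qed
  from main[of 1] obtain N where "summable (\<lambda>k. (cmod (co (X N) k - L k))^2)" by auto
  hence sN: "sqs (\<lambda>k. co (X N) k - L k)" by (simp add: sqs_def)
  have "sqs (\<lambda>k. co (X N) k - (co (X N) k - L k))"
    using sqs_add[OF sqs_co[of "X N"] sqs_uminus[OF sN]] by simp
  hence sL: "sqs L" by simp
  define Y where "Y = Abs_ell2 L"
  have coY: "co Y = L" unfolding Y_def using sL by (simp add: Abs_ell2_inverse)
  have "X \<longlonglongrightarrow> Y"
  proof (rule LIMSEQ_I)
    fix r :: real assume r: "0 < r"
    from main[of "r/2"] r obtain N where N: "\<forall>m\<ge>N. (\<Sum>k. (cmod (co (X m) k - L k))^2) \<le> (r/2)^2" by auto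
    show "\<exists>no. \<forall>n\<ge>no. norm (X n - Y) < r"
    proof (intro exI allI impI)
      fix n assume "N \<le> n"
      have "(norm (X n - Y))^2 = (\<Sum>k. (cmod (co (X n) k - L k))^2)" by (simp add: norm_sq_co coY)
      also have "\<dots> \<le> (r/2)^2" using N[rule_format, OF \<open>N \<le> n\<close>] .
      finally have "norm (X n - Y) \<le> r/2" by (rule power2_le_imp_le) (use r in simp)
      thus "norm (X n - Y) < r" using r by simp
    qed
  qed
  thus "convergent X" by (rule convergentI)
qed


definition gam :: "nat \<Rightarrow> real" where "gam k = (-1)^k * ((1/2) gchoose k)"

primrec qq :: "nat \<Rightarrow> real" where
  "qq 0 = 1" | "qq (Suc n) = qq n * (real n + 1/2) / (real n + 1)"

lemma gam_0 [simp]: "gam 0 = 1" by (simp add: gam_def)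

lemma gam_Suc: "gam (Suc k) = gam k * (real k - 1/2) / (real k + 1)"
proof -
  have "(1/2::real) * ((1/2) gchoose k) = real k * ((1/2) gchoose k) + real (Suc k) * ((1/2) gchoose (Suc k))"
    by (rule gbinomial_mult_1)
  hence "((1/2::real) gchoose (Suc k)) = (1/2 - real k) * ((1/2) gchoose k) / (real k + 1)"
    by (simp add: field_simps)
  hence "gam (Suc k) = - ((-1)^k * ((1/2 - real k) * ((1/2) gchoose k) / (real k + 1)))"
    by (simp add: gam_def)
  also have "\<dots> = gam k * (real k - 1/2) / (real k + 1)"
    unfolding gam_def by (simp add: divide_simps) (simp add: algebra_simps)
  finally show ?thesis .
qed

lemma qq_pos: "qq n > 0" by (induct n) auto

lemma gam_Suc_q: "gam (Suc n) = - qq n / (2 * (real n + 1))"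
proof (induct n)
  case 0 thus ?case by (simp add: gam_Suc)
next
  case (Suc n)
  have "gam (Suc (Suc n)) = gam (Suc n) * (real (Suc n) - 1/2) / (real (Suc n) + 1)" by (rule gam_Suc)
  also have "\<dots> = - qq n / (2 * (real n + 1)) * (real n + 1/2) / (real n + 2)" using Suc by (simp add: algebra_simps)
  also have "\<dots> = - qq (Suc n) / (2 * (real (Suc n) + 1))" by (simp add: field_simps)
  finally show ?case .
qed

lemma gam_nonpos: "k \<ge> 1 \<Longrightarrow> gam k \<le> 0"
  using gam_Suc_q[of "k - 1"] qq_pos[of "k - 1"] by (cases k) (auto simp: divide_nonpos_pos)

lemma gam_partial: "(\<Sum>k\<le>n. gam k) = qq n"
proof (induct n)
  case 0 thus ?case by simp
next
  case (Suc n)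
  have "(\<Sum>k\<le>Suc n. gam k) = qq n + gam (Suc n)" using Suc by simp
  also have "\<dots> = qq (Suc n)" by (simp add: gam_Suc_q field_simps)
  finally show ?case .
qed

lemma abs_gam_partial: "(\<Sum>k<N. \<bar>gam k\<bar>) \<le> 2"
proof (cases N)
  case 0 thus ?thesis by simp
next
  case (Suc n)
  have "(\<Sum>k<N. \<bar>gam k\<bar>) = (\<Sum>k\<le>n. \<bar>gam k\<bar>)" using Suc by (simp add: lessThan_Suc_atMost)
  also have "\<dots> = (\<Sum>k\<le>n. (if k = 0 then 2 else 0) - gam k)"
  proof (rule sum.cong)
    fix k assume "k \<in> {..n}"
    show "\<bar>gam k\<bar> = (if k = 0 then 2 else 0) - gam k"
      using gam_nonpos[of k] by (cases "k = 0") auto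
  qed simp
  also have "\<dots> = 2 - qq n"
    by (simp add: sum_subtractf gam_partial)
  also have "\<dots> \<le> 2" using qq_pos[of n] by simp
  finally show ?thesis .
qed

lemma summable_abs_gam: "summable (\<lambda>k. \<bar>gam k\<bar>)"
  by (rule summableI_nonneg_bounded[OF _ abs_gam_partial]) simp

lemma suminf_abs_gam: "(\<Sum>k. \<bar>gam k\<bar>) \<le> 2"
  by (rule suminf_le_const[OF summable_abs_gam abs_gam_partial])

lemma gam_cauchy: "(\<Sum>i\<le>n. gam i * gam (n - i)) = (if n = 0 then 1 else if n = 1 then -1 else 0)"
proof -
  define F where "F = fps_binomial (1/2 :: real)"
  have "F * F = fps_binomial 1" unfolding F_def by (simp add: fps_binomial_add_mult[symmetric])
  also have "\<dots> = 1 + fps_X" by (rule fps_binomial_1)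
  finally have FF: "F * F = 1 + fps_X" .
  have "(\<Sum>i=0..n. ((1/2::real) gchoose i) * ((1/2) gchoose (n - i))) = (F * F) $ n"
    by (simp add: fps_mult_nth F_def)
  also have "\<dots> = (if n = 0 then 1 else if n = 1 then 1 else 0)" unfolding FF by (simp add: fps_X_nth)
  finally have eq: "(\<Sum>i=0..n. ((1/2::real) gchoose i) * ((1/2) gchoose (n - i))) = (if n = 0 then 1 else if n = 1 then 1 else 0)" .
  have "(\<Sum>i\<le>n. gam i * gam (n - i)) = (\<Sum>i=0..n. (-1)^n * (((1/2::real) gchoose i) * ((1/2) gchoose (n - i))))"
    unfolding atMost_atLeast0
  proof (rule sum.cong)
    fix i assume "i \<in> {0..n}"
    hence "(-1::real)^i * (-1)^(n-i) = (-1)^n" by (simp add: power_add[symmetric])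
    thus "gam i * gam (n - i) = (-1)^n * (((1/2::real) gchoose i) * ((1/2) gchoose (n - i)))"
      unfolding gam_def by (metis (no_types, lifting) mult.assoc mult.left_commute)
  qed simp
  also have "\<dots> = (-1)^n * (\<Sum>i=0..n. ((1/2::real) gchoose i) * ((1/2) gchoose (n - i)))"
    by (simp add: sum_distrib_left)
  also have "\<dots> = (if n = 0 then 1 else if n = 1 then -1 else 0)" unfolding eq by simp
  finally show ?thesis .
qed


definition clinear :: "(ell2 \<Rightarrow> ell2) \<Rightarrow> bool" where
  "clinear f \<longleftrightarrow> (\<forall>x y. f (x + y) = f x + f y) \<and> (\<forall>c x. f (cscale c x) = cscale c (f x))"

lemma clinear_add: "clinear f \<Longrightarrow> f (x + y) = f x + f y" by (simp add: clinear_def)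
lemma clinear_cscale: "clinear f \<Longrightarrow> f (cscale c x) = cscale c (f x)" by (simp add: clinear_def)
lemma clinear_scaleR: "clinear f \<Longrightarrow> f (r *\<^sub>R x) = r *\<^sub>R f x"
  using clinear_cscale[of f "of_real r" x] by (simp add: cscale_of_real)
lemma clinear_zero: "clinear f \<Longrightarrow> f 0 = 0"
  using clinear_scaleR[of f 0 0] by simp
lemma clinear_uminus: "clinear f \<Longrightarrow> f (- x) = - f x"
  using clinear_scaleR[of f "-1" x] by simp
lemma clinear_diff: "clinear f \<Longrightarrow> f (x - y) = f x - f y"
  using clinear_add[of f x "- y"] clinear_uminus[of f y] by simp
lemma clinear_sum: "clinear f \<Longrightarrow> f (\<Sum>i\<in>A. g i) = (\<Sum>i\<in>A. f (g i))"
  by (induct A rule: infinite_finite_induct) (simp_all add: clinear_zero clinear_add)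

lemma clinear_bl: assumes "clinear f" "\<And>x. norm (f x) \<le> K * norm x" shows "bounded_linear f"
  by (rule bounded_linear_intro[of _ K]) (use assms in \<open>auto simp: clinear_add clinear_scaleR mult.commute\<close>)

lemma bl_cinner_left: "bounded_linear (\<lambda>x. cinner x y)"
  by (rule bounded_linear_intro[of _ "norm y"])
     (auto simp: cinner_add_left cinner_scaleR_left scaleR_conv_of_real norm_cinner)

lemma bl_cscale: "bounded_linear (cscale c)"
  by (rule bounded_linear_intro[of _ "cmod c"])
     (auto simp: cscale_add_right norm_cscale mult.commute simp flip: cscale_of_real simp: cscale_cscale)

lemma co_sum: "co (\<Sum>i\<in>A. f i) k = (\<Sum>i\<in>A. co (f i) k)"
  by (induct A rule: infinite_finite_induct) simp_all

lemma co_ket_sum: "co (\<Sum>n<N. cscale (b n) (ket n)) k = (if k < N then b k else 0)"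
proof -
  have "co (\<Sum>n<N. cscale (b n) (ket n)) k = (\<Sum>n<N. if k = n then b n else 0)"
    unfolding co_sum by (rule sum.cong) (auto simp: co_ket)
  also have "\<dots> = (if k < N then b k else 0)" by (simp add: sum.delta')
  finally show ?thesis .
qed

lemma norm_sq_ket_sum: "(norm (\<Sum>n<N. cscale (b n) (ket n)))^2 = (\<Sum>n<N. (cmod (b n))^2)"
proof -
  have "(norm (\<Sum>n<N. cscale (b n) (ket n)))^2 = (\<Sum>k. (cmod (if k < N then b k else 0))^2)"
    by (simp add: norm_sq_co co_ket_sum)
  also have "\<dots> = (\<Sum>k<N. (cmod (if k < N then b k else 0))^2)"
    by (rule suminf_finite) auto
  also have "\<dots> = (\<Sum>k<N. (cmod (b k))^2)" by simp
  finally show ?thesis .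
qed

definition trunc :: "nat \<Rightarrow> ell2 \<Rightarrow> ell2" where
  "trunc N x = (\<Sum>n<N. cscale (co x n) (ket n))"

lemma trunc_tendsto: "(\<lambda>N. trunc N x) \<longlonglongrightarrow> x"
proof -
  have "(\<lambda>N. (\<Sum>n<N. (cmod (co x n))^2)) \<longlonglongrightarrow> (\<Sum>n. (cmod (co x n))^2)"
    by (rule summable_LIMSEQ[OF summable_co])
  hence "(\<lambda>N. (\<Sum>n. (cmod (co x n))^2) - (\<Sum>n<N. (cmod (co x n))^2)) \<longlonglongrightarrow> 0"
    using tendsto_diff[OF tendsto_const[of "\<Sum>n. (cmod (co x n))^2"]] by fastforce
  moreover have "(norm (x - trunc N x))^2 = (\<Sum>n. (cmod (co x n))^2) - (\<Sum>n<N. (cmod (co x n))^2)" for N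
  proof -
    have "(norm (x - trunc N x))^2 = (\<Sum>n. (cmod (co x n))^2 - (cmod (if n < N then co x n else 0))^2)"
      by (simp add: norm_sq_co trunc_def co_ket_sum) (rule suminf_cong, simp)
    also have "\<dots> = (\<Sum>n. (cmod (co x n))^2) - (\<Sum>n. (cmod (if n < N then co x n else 0))^2)"
      by (rule suminf_diff[OF summable_co, symmetric]) (rule summable_finite[of "{..<N}"], auto)
    also have "(\<Sum>n. (cmod (if n < N then co x n else 0))^2) = (\<Sum>n<N. (cmod (if n < N then co x n else 0))^2)"
      by (rule suminf_finite) auto
    finally show ?thesis by simp
  qed
  ultimately have "(\<lambda>N. (norm (x - trunc N x))^2) \<longlonglongrightarrow> 0" by simp
  hence "(\<lambda>N. sqrt ((norm (x - trunc N x))^2)) \<longlonglongrightarrow> sqrt 0" by (rule tendsto_real_sqrt)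
  hence "(\<lambda>N. norm (trunc N x - x)) \<longlonglongrightarrow> 0" by (simp add: norm_minus_commute)
  thus ?thesis by (simp add: tendsto_norm_zero_iff LIM_zero_iff)
qed


lemma cnj_mult_self2: "cnj z * z = (complex_of_real (cmod z))^2"
  by (metis complex_norm_square mult.commute of_real_power)

lemma adjoint_exists:
  assumes T: "clinear T" and K: "\<And>x. norm (T x) \<le> K * norm x"
  shows "\<exists>S. clinear S \<and> (\<forall>y. norm (S y) \<le> K * norm y) \<and> (\<forall>x y. cinner (T x) y = cinner x (S y))"
proof -
  have K0: "K \<ge> 0" using K[of "ket 0"] by simp (metis norm_ge_zero order_trans)
  define b where "b y n = cinner y (T (ket n))" for y n
  have bound: "(\<Sum>n<N. (cmod (b y n))^2) \<le> K^2 * (norm y)^2" for y N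
  proof -
    define z where "z = (\<Sum>n<N. cscale (b y n) (ket n))"
    have nz: "(norm z)^2 = (\<Sum>n<N. (cmod (b y n))^2)" unfolding z_def by (rule norm_sq_ket_sum)
    have "cinner (T z) y = (\<Sum>n<N. b y n * cinner (T (ket n)) y)"
      unfolding z_def by (simp add: clinear_sum[OF T] clinear_cscale[OF T] cinner_sum_left cinner_scale_left)
    also have "\<dots> = (\<Sum>n<N. of_real ((cmod (b y n))^2))"
      by (rule sum.cong) (simp_all add: b_def cinner_commute[of y] cnj_mult_self2)
    finally have "cinner (T z) y = of_real ((norm z)^2)" by (simp add: nz)
    hence "(norm z)^2 = cmod (cinner (T z) y)" by (metis abs_norm_cancel norm_of_real norm_power power2_abs)
    also have "\<dots> \<le> norm (T z) * norm y" by (rule norm_cinner)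
    also have "\<dots> \<le> K * norm z * norm y" by (rule mult_right_mono[OF K]) simp
    finally have "norm z * norm z \<le> norm z * (K * norm y)" by (simp add: power2_eq_square mult_ac)
    hence "norm z \<le> K * norm y"
      by (cases "norm z = 0") (use K0 in auto)
    hence "(norm z)^2 \<le> (K * norm y)^2" by (intro power_mono) simp_all
    thus ?thesis by (simp add: nz power_mult_distrib)
  qed
  have sq: "sqs (b y)" for y
    unfolding sqs_def by (rule summableI_nonneg_bounded[OF _ bound]) simp
  define S where "S y = Abs_ell2 (b y)" for y
  have coS: "co (S y) = b y" for y unfolding S_def using sq[of y] by (simp add: Abs_ell2_inverse)
  have "clinear S" unfolding clinear_def
    by (auto intro!: ell2_eqI simp: coS b_def cinner_add_left cinner_scale_left)
  moreover have "norm (S y) \<le> K * norm y" for y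
  proof -
    have "(norm (S y))^2 \<le> (K * norm y)^2"
      unfolding norm_sq_co[of "S y"] coS power_mult_distrib
      by (rule suminf_le_const[OF _ bound]) (use sq[of y] in \<open>simp add: sqs_def\<close>)
    thus ?thesis by (rule power2_le_imp_le) (use K0 in simp)
  qed
  moreover have "cinner (T x) y = cinner x (S y)" for x y
  proof -
    have blT: "bounded_linear T" by (rule clinear_bl[OF T K])
    have "(\<lambda>N. cinner (T (trunc N x)) y) \<longlonglongrightarrow> cinner (T x) y"
      by (rule bounded_linear.tendsto[OF bl_cinner_left bounded_linear.tendsto[OF blT trunc_tendsto]])
    moreover have "cinner (T (trunc N x)) y = (\<Sum>n<N. co x n * cnj (co (S y) n))" for N
      unfolding trunc_def
      by (simp add: clinear_sum[OF T] clinear_cscale[OF T] cinner_sum_left cinner_scale_left coS b_def cinner_commute[of y])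
    moreover have "(\<lambda>N. \<Sum>n<N. co x n * cnj (co (S y) n)) \<longlonglongrightarrow> cinner x (S y)"
      unfolding cinner_co by (rule summable_LIMSEQ[OF summable_cinner])
    ultimately show ?thesis using LIMSEQ_unique by fastforce
  qed
  ultimately show ?thesis by blast
qed


definition sadj :: "(ell2 \<Rightarrow> ell2) \<Rightarrow> bool" where
  "sadj Q \<longleftrightarrow> (\<forall>x y. cinner (Q x) y = cinner x (Q y))"

definition cpos :: "(ell2 \<Rightarrow> ell2) \<Rightarrow> bool" where
  "cpos Q \<longleftrightarrow> (\<forall>x. Im (cinner (Q x) x) = 0 \<and> 0 \<le> Re (cinner (Q x) x))"

lemma sadj_from_pos:
  assumes Q: "clinear Q" and im: "\<And>x. Im (cinner (Q x) x) = 0"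
  shows "sadj Q"
  unfolding sadj_def
proof (intro allI)
  fix x y
  define u where "u = cinner (Q x) y"
  define v where "v = cinner (Q y) x"
  have "Im (cinner (Q (x + y)) (x + y)) = 0" by (rule im)
  hence h1: "Im (u + v) = 0"
    using im[of x] im[of y]
    by (simp add: clinear_add[OF Q] cinner_add_left cinner_add_right u_def v_def)
  have "Im (cinner (Q (x + cscale \<i> y)) (x + cscale \<i> y)) = 0" by (rule im)
  hence "Im (cinner (Q x) x + cnj \<i> * u + \<i> * v + \<i> * cnj \<i> * cinner (Q y) y) = 0"
    by (simp add: clinear_add[OF Q] clinear_cscale[OF Q] cinner_add_left cinner_add_right
        cinner_scale_left cinner_scale_right u_def v_def algebra_simps)
  hence h2: "Re u = Re v" using im[of x] im[of y] by simp
  have "u = cnj v" using h1 h2 by (simp add: complex_eq_iff)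
  thus "cinner (Q x) y = cinner x (Q y)" by (simp add: u_def v_def cinner_commute[of x])
qed

lemma cpos_zero:
  assumes Q: "clinear Q" and sa: "sadj Q" and pos: "cpos Q" and y: "Re (cinner (Q y) y) = 0"
  shows "Q y = 0"
proof (rule ccontr)
  assume ne: "Q y \<noteq> 0"
  define w where "w = Q y"
  define n where "n = (norm w)^2"
  define c where "c = Re (cinner (Q w) w)"
  have n0: "n > 0" using ne by (simp add: n_def w_def)
  have c0: "c \<ge> 0" using pos by (simp add: cpos_def c_def)
  have wy: "cinner (Q w) y = cinner w w" using sa by (simp add: sadj_def w_def)
  have key: "0 \<le> - 2 * l * n + l^2 * c" for l :: real
  proof -
    have "0 \<le> Re (cinner (Q (y - l *\<^sub>R w)) (y - l *\<^sub>R w))" using pos by (simp add: cpos_def)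
    also have "cinner (Q (y - l *\<^sub>R w)) (y - l *\<^sub>R w) = cinner (w - l *\<^sub>R Q w) (y - l *\<^sub>R w)"
      by (simp add: clinear_diff[OF Q] clinear_scaleR[OF Q] w_def)
    also have "\<dots> = cinner w y - of_real l * cinner w w - of_real l * cinner (Q w) y + of_real l * of_real l * cinner (Q w) w"
      by (simp add: cinner_diff_left cinner_diff_right cinner_scaleR_left cinner_scaleR_right algebra_simps)
    also have "\<dots> = cinner (Q y) y - 2 * of_real l * cinner w w + of_real l * of_real l * cinner (Q w) w"
      using wy by (simp add: w_def)
    finally show ?thesis using y by (simp add: n_def c_def cinner_self power2_eq_square)
  qed
  define l where "l = n / (c + 1)"
  have l0: "l > 0" using n0 c0 by (simp add: l_def)
  have "0 \<le> l * (- 2 * n + l * c)" using key[of l] by (simp add: power2_eq_square algebra_simps)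
  hence h: "0 \<le> - 2 * n + l * c" using l0 by (simp add: zero_le_mult_iff)
  have "l * c = n * (c / (c + 1))" by (simp add: l_def)
  also have "\<dots> \<le> n * 1" using c0 n0 by (intro mult_left_mono) simp_all
  finally have "l * c \<le> n" by simp
  hence False using h n0 by linarith
  thus False .
qed

lemma sqrt_unique:
  assumes R: "clinear R" "sadj R" "cpos R" and R': "clinear R'" "sadj R'" "cpos R'"
    and sq: "\<And>x. R (R x) = R' (R' x)" and comm: "\<And>x. R (R' x) = R' (R x)"
  shows "R x = R' x"
proof -
  define y where "y = R x - R' x"
  have "R y + R' y = 0"
    unfolding y_def by (simp add: clinear_diff[OF R(1)] clinear_diff[OF R'(1)] sq comm)
  hence "cinner (R y + R' y) y = 0" by simp
  hence "Re (cinner (R y) y) + Re (cinner (R' y) y) = 0"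
    unfolding cinner_add_left by (metis plus_complex.sel(1) zero_complex.sel(1))
  moreover have "0 \<le> Re (cinner (R y) y)" "0 \<le> Re (cinner (R' y) y)"
    using R(3) R'(3) by (simp_all add: cpos_def)
  ultimately have "Re (cinner (R y) y) = 0" "Re (cinner (R' y) y) = 0" by linarith+
  hence "R y = 0" "R' y = 0" using cpos_zero R R' by blast+
  have "cinner y y = cinner (R x) y - cinner (R' x) y" by (simp add: y_def cinner_diff_left)
  also have "\<dots> = cinner x (R y) - cinner x (R' y)" using R(2) R'(2) by (simp add: sadj_def)
  also have "\<dots> = 0" using \<open>R y = 0\<close> \<open>R' y = 0\<close> by simp
  finally have "y = 0" by (simp add: cinner_self)
  thus ?thesis by (simp add: y_def)
qed

lemma pos_bounded:
  assumes Q: "clinear Q" "sadj Q" and A: "\<And>x. Q (Q x) = A x" and K: "\<And>x. norm (A x) \<le> K * norm x"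
  shows "norm (Q x) \<le> sqrt (max K 0) * norm x"
proof -
  have "(norm (Q x))^2 = Re (cinner (Q x) (Q x))" by (simp add: cinner_self)
  also have "\<dots> = Re (cinner (A x) x)" using Q(2) A by (simp add: sadj_def) (metis Q(2) sadj_def)
  also have "\<dots> \<le> cmod (cinner (A x) x)" by (rule complex_Re_le_cmod)
  also have "\<dots> \<le> norm (A x) * norm x" by (rule norm_cinner)
  also have "\<dots> \<le> max K 0 * norm x * norm x"
  proof -
    have "K * norm x \<le> max K 0 * norm x" by (rule mult_right_mono) simp_all
    hence "norm (A x) \<le> max K 0 * norm x" using K[of x] by linarith
    thus ?thesis by (rule mult_right_mono) simp
  qed
  also have "\<dots> = (sqrt (max K 0) * norm x)^2" by (simp add: power2_eq_square power_mult_distrib)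
  finally show ?thesis by (rule power2_le_imp_le) simp
qed


primrec bpow :: "('a::real_normed_vector \<Rightarrow>\<^sub>L 'a) \<Rightarrow> nat \<Rightarrow> ('a \<Rightarrow>\<^sub>L 'a)" where
  "bpow B 0 = id_blinfun" | "bpow B (Suc n) = B o\<^sub>L bpow B n"

lemma compose_assoc: "(a o\<^sub>L b) o\<^sub>L c = a o\<^sub>L (b o\<^sub>L c)" by (rule blinfun_eqI) simp
lemma compose_id_left [simp]: "id_blinfun o\<^sub>L a = a" by (rule blinfun_eqI) simp
lemma compose_id_right [simp]: "a o\<^sub>L id_blinfun = a" by (rule blinfun_eqI) simp

lemma bpow_add: "bpow B (i + j) = bpow B i o\<^sub>L bpow B j"
  by (induct i) (simp_all add: compose_assoc)

lemma bpow_Suc': "bpow B (Suc n) = bpow B n o\<^sub>L B"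
  using bpow_add[of B n 1] by simp

lemma norm_bpow: "norm B \<le> 1 \<Longrightarrow> norm (bpow B n) \<le> 1"
proof (induct n)
  case 0 thus ?case by (simp add: norm_blinfun_id_le)
next
  case (Suc n)
  have "norm (bpow B (Suc n)) \<le> norm B * norm (bpow B n)" by (simp add: norm_blinfun_compose)
  also have "\<dots> \<le> 1 * 1" using Suc by (intro mult_mono) simp_all
  finally show ?case by simp
qed

lemma compose_cauchy:
  fixes a b :: "nat \<Rightarrow> ('a::banach \<Rightarrow>\<^sub>L 'a)"
  assumes a: "summable (\<lambda>k. norm (a k))"
    and b: "summable (\<lambda>k. norm (b k))"
  shows "(\<lambda>k. \<Sum>i\<le>k. a i o\<^sub>L b (k - i)) sums ((\<Sum>k. a k) o\<^sub>L (\<Sum>k. b k))"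
proof -
  let ?S1 = "\<lambda>n::nat. {..<n} \<times> {..<n}"
  let ?S2 = "\<lambda>n::nat. {(i,j). i + j < n}"
  have S1_mono: "\<And>m n. m \<le> n \<Longrightarrow> ?S1 m \<subseteq> ?S1 n" by auto
  have S2_le_S1: "\<And>n. ?S2 n \<subseteq> ?S1 n" by auto
  have S1_le_S2: "\<And>n. ?S1 (n div 2) \<subseteq> ?S2 n" by auto
  have finite_S1: "\<And>n. finite (?S1 n)" by simp
  with S2_le_S1 have finite_S2: "\<And>n. finite (?S2 n)" by (rule finite_subset)
  note bb = bounded_bilinear_blinfun_compose
  let ?g = "\<lambda>(i,j). a i o\<^sub>L b j"
  let ?f = "\<lambda>(i,j). norm (a i) * norm (b j)"
  have f_nonneg: "\<And>x. 0 \<le> ?f x" by auto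
  then have norm_sum_f: "\<And>A. norm (sum ?f A) = sum ?f A"
    unfolding real_norm_def
    by (simp only: abs_of_nonneg sum_nonneg [rule_format])
  have prod_eq: "(\<Sum>k<n. a k) o\<^sub>L (\<Sum>k<n. b k) = sum ?g (?S1 n)" for n
  proof -
    have "(\<Sum>k<n. a k) o\<^sub>L (\<Sum>k<n. b k) = (\<Sum>i<n. a i o\<^sub>L (\<Sum>k<n. b k))"
      by (rule bounded_bilinear.sum_left[OF bb])
    also have "\<dots> = (\<Sum>i<n. \<Sum>j<n. a i o\<^sub>L b j)"
      by (simp only: bounded_bilinear.sum_right[OF bb])
    also have "\<dots> = sum ?g (?S1 n)" by (simp add: sum.cartesian_product)
    finally show ?thesis .
  qed
  have "(\<lambda>n. (\<Sum>k<n. a k) o\<^sub>L (\<Sum>k<n. b k)) \<longlonglongrightarrow> ((\<Sum>k. a k) o\<^sub>L (\<Sum>k. b k))"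
    by (intro bounded_bilinear.tendsto[OF bb] summable_LIMSEQ summable_norm_cancel [OF a] summable_norm_cancel [OF b])
  then have 1: "(\<lambda>n. sum ?g (?S1 n)) \<longlonglongrightarrow> ((\<Sum>k. a k) o\<^sub>L (\<Sum>k. b k))"
    by (simp only: prod_eq)
  have "(\<lambda>n. (\<Sum>k<n. norm (a k)) * (\<Sum>k<n. norm (b k))) \<longlonglongrightarrow> (\<Sum>k. norm (a k)) * (\<Sum>k. norm (b k))"
    using a b by (intro tendsto_mult summable_LIMSEQ)
  then have "(\<lambda>n. sum ?f (?S1 n)) \<longlonglongrightarrow> (\<Sum>k. norm (a k)) * (\<Sum>k. norm (b k))"
    by (simp only: sum_product sum.Sigma [rule_format] finite_lessThan)
  then have "convergent (\<lambda>n. sum ?f (?S1 n))"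
    by (rule convergentI)
  then have Cauchy: "Cauchy (\<lambda>n. sum ?f (?S1 n))"
    by (rule convergent_Cauchy)
  have "Zfun (\<lambda>n. sum ?f (?S1 n - ?S2 n)) sequentially"
  proof (rule ZfunI, simp only: eventually_sequentially norm_sum_f)
    fix r :: real
    assume r: "0 < r"
    from CauchyD [OF Cauchy r] obtain N
      where "\<forall>m\<ge>N. \<forall>n\<ge>N. norm (sum ?f (?S1 m) - sum ?f (?S1 n)) < r" ..
    then have "\<And>m n. N \<le> n \<Longrightarrow> n \<le> m \<Longrightarrow> norm (sum ?f (?S1 m - ?S1 n)) < r"
      by (simp only: sum_diff finite_S1 S1_mono)
    then have N: "\<And>m n. N \<le> n \<Longrightarrow> n \<le> m \<Longrightarrow> sum ?f (?S1 m - ?S1 n) < r"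
      by (simp only: norm_sum_f)
    show "\<exists>N. \<forall>n\<ge>N. sum ?f (?S1 n - ?S2 n) < r"
    proof (intro exI allI impI)
      fix n
      assume "2 * N \<le> n"
      then have n: "N \<le> n div 2" by simp
      have "sum ?f (?S1 n - ?S2 n) \<le> sum ?f (?S1 n - ?S1 (n div 2))"
        by (intro sum_mono2 finite_Diff finite_S1 f_nonneg Diff_mono subset_refl S1_le_S2)
      also have "\<dots> < r"
        using n div_le_dividend by (rule N)
      finally show "sum ?f (?S1 n - ?S2 n) < r" .
    qed
  qed
  then have "Zfun (\<lambda>n. sum ?g (?S1 n - ?S2 n)) sequentially"
    apply (rule Zfun_le [rule_format])
    apply (simp only: norm_sum_f)
    apply (rule order_trans [OF norm_sum sum_mono])
    apply (auto simp add: norm_blinfun_compose)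
    done
  then have 2: "(\<lambda>n. sum ?g (?S1 n) - sum ?g (?S2 n)) \<longlonglongrightarrow> 0"
    unfolding tendsto_Zfun_iff diff_0_right
    by (simp only: sum_diff finite_S1 S2_le_S1)
  with 1 have "(\<lambda>n. sum ?g (?S2 n)) \<longlonglongrightarrow> ((\<Sum>k. a k) o\<^sub>L (\<Sum>k. b k))"
    by (rule Lim_transform2)
  then show ?thesis
    by (simp only: sums_def sum.triangle_reindex)
qed


instance ell2 :: banach ..

lemma norm_cinner': "cmod (cinner x y) \<le> norm y * norm x"
  by (metis norm_cinner mult.commute)

lemma cscale_scaleR_commute: "cscale c (r *\<^sub>R x) = r *\<^sub>R cscale c x"
  by (rule ell2_eqI) (simp add: mult.left_commute)

lemma bl_cinner_right: "bounded_linear (\<lambda>y. cinner x y)"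
  by (rule bounded_linear_intro[of _ "norm x"])
     (auto simp: cinner_add_right cinner_scaleR_right scaleR_conv_of_real norm_cinner')

lemma sadj_cinner_real: "sadj P \<Longrightarrow> Im (cinner (P x) x) = 0"
  by (metis Reals_cnj_iff cinner_commute complex_is_Real_iff sadj_def)

lemma sqrt_exists:
  assumes A: "clinear A" and KA: "\<And>x. norm (A x) \<le> KA * norm x"
    and saA: "sadj A" and t: "t > 0" and Bn: "\<And>x. norm (x - t *\<^sub>R A x) \<le> norm x"
  shows "\<exists>R. clinear R \<and> sadj R \<and> cpos R \<and> (\<forall>x. R (R x) = A x) \<and>
             (\<forall>Q. bounded_linear Q \<longrightarrow> (\<forall>x. Q (A x) = A (Q x)) \<longrightarrow> (\<forall>x. Q (R x) = R (Q x)))"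
proof -
  have blA: "bounded_linear A" by (rule clinear_bl[OF A KA])
  define fB where "fB x = x - t *\<^sub>R A x" for x
  have blB: "bounded_linear fB" unfolding fB_def
    by (intro bounded_linear_sub bounded_linear_ident bounded_linear_compose[OF bounded_linear_scaleR_right blA])
  define B where "B = Blinfun fB"
  have Bapp: "blinfun_apply B = fB" unfolding B_def by (rule bounded_linear_Blinfun_apply[OF blB])
  have nB: "norm B \<le> 1" by (rule norm_blinfun_bound) (simp_all add: Bapp fB_def Bn)
  have clB: "clinear fB" unfolding clinear_def fB_def
    by (simp add: clinear_add[OF A] clinear_cscale[OF A] cscale_minus_right cscale_scaleR_commute algebra_simps)
  have saB: "sadj fB" using saA unfolding sadj_def fB_def
    by (simp add: cinner_diff_left cinner_diff_right cinner_scaleR_left cinner_scaleR_right)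
  define P where "P k = blinfun_apply (bpow B k)" for k
  have P0: "P 0 x = x" for x by (simp add: P_def)
  have PSuc: "P (Suc k) x = fB (P k x)" for k x by (simp add: P_def Bapp)
  have PSuc': "P (Suc k) x = P k (fB x)" for k x
    unfolding P_def by (simp only: bpow_Suc' blinfun_apply_blinfun_compose Bapp)
  have clP: "clinear (P k)" for k
    by (induct k) (simp_all add: clinear_def P0 PSuc clinear_add[OF clB] clinear_cscale[OF clB])
  have saP: "sadj (P k)" for k
  proof (induct k)
    case 0 thus ?case by (simp add: sadj_def P0)
  next
    case (Suc k)
    show ?case unfolding sadj_def
    proof (intro allI)
      fix x y
      have "cinner (P (Suc k) x) y = cinner (P k x) (fB y)"
        using saB by (simp add: PSuc sadj_def)
      also have "\<dots> = cinner x (P k (fB y))" using Suc by (simp add: sadj_def)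
      also have "\<dots> = cinner x (P (Suc k) y)" by (simp add: PSuc')
      finally show "cinner (P (Suc k) x) y = cinner x (P (Suc k) y)" .
    qed
  qed
  have nP: "norm (P k x) \<le> norm x" for k x
  proof -
    have "norm (P k x) \<le> norm (bpow B k) * norm x" unfolding P_def by (rule norm_blinfun)
    also have "\<dots> \<le> 1 * norm x" by (rule mult_right_mono[OF norm_bpow[OF nB]]) simp
    finally show ?thesis by simp
  qed
  have commP: "Q (P k x) = P k (Q x)" if Q: "bounded_linear Q" "\<forall>x. Q (A x) = A (Q x)" for Q k x
  proof (induct k arbitrary: x)
    case 0 thus ?case by (simp add: P0)
  next
    case (Suc k)
    have lQ: "linear Q" using Q(1) by (rule bounded_linear.linear)
    have "Q (P (Suc k) x) = Q (P k x) - t *\<^sub>R Q (A (P k x))"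
      by (simp add: PSuc fB_def linear_diff[OF lQ] linear_scale[OF lQ])
    also have "\<dots> = P (Suc k) (Q x)" using Q(2) Suc by (simp add: PSuc fB_def)
    finally show ?case .
  qed
  define F where "F = (\<lambda>k. gam k *\<^sub>R bpow B k)"
  have nF: "norm (F k) \<le> \<bar>gam k\<bar>" for k
  proof -
    have "norm (F k) = \<bar>gam k\<bar> * norm (bpow B k)" by (simp add: F_def)
    also have "\<dots> \<le> \<bar>gam k\<bar> * 1" by (rule mult_left_mono[OF norm_bpow[OF nB]]) simp
    finally show ?thesis by simp
  qed
  have sumnF: "summable (\<lambda>k. norm (F k))"
    by (rule summable_comparison_test'[OF summable_abs_gam]) (simp add: nF)
  have sumF: "summable F" by (rule summable_norm_cancel[OF sumnF])
  define R0 where "R0 = (\<Sum>k. F k)"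
  have R0app: "blinfun_apply R0 x = (\<Sum>k. gam k *\<^sub>R P k x)" for x
    unfolding R0_def using bounded_linear.suminf[OF blinfun.bounded_linear_left sumF, of x]
    by (simp add: F_def P_def blinfun.scaleR_left)
  have sumx: "summable (\<lambda>k. gam k *\<^sub>R P k x)" for x
    using bounded_linear.summable[OF blinfun.bounded_linear_left sumF, of x]
    by (simp add: F_def P_def blinfun.scaleR_left)
  have R0R0: "R0 o\<^sub>L R0 = id_blinfun - B"
  proof -
    have "(\<lambda>k. \<Sum>i\<le>k. F i o\<^sub>L F (k - i)) sums (R0 o\<^sub>L R0)"
      unfolding R0_def by (rule compose_cauchy[OF sumnF sumnF])
    moreover have "(\<Sum>i\<le>k. F i o\<^sub>L F (k - i)) = (if k = 0 then 1 else if k = 1 then -1 else 0) *\<^sub>R bpow B k" for k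
    proof -
      have "(\<Sum>i\<le>k. F i o\<^sub>L F (k - i)) = (\<Sum>i\<le>k. (gam i * gam (k - i)) *\<^sub>R bpow B k)"
      proof (rule sum.cong)
        fix i assume "i \<in> {..k}"
        hence "bpow B k = bpow B i o\<^sub>L bpow B (k - i)" using bpow_add[of B i "k - i"] by simp
        thus "F i o\<^sub>L F (k - i) = (gam i * gam (k - i)) *\<^sub>R bpow B k"
          by (simp add: F_def blinfun.scaleR_left blinfun.scaleR_right
              bounded_bilinear.scaleR_left[OF bounded_bilinear_blinfun_compose]
              bounded_bilinear.scaleR_right[OF bounded_bilinear_blinfun_compose])
      qed simp
      also have "\<dots> = (\<Sum>i\<le>k. gam i * gam (k - i)) *\<^sub>R bpow B k" by (simp add: scaleR_sum_left)
      finally show ?thesis by (simp add: gam_cauchy)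
    qed
    ultimately have "(\<lambda>k. (if k = 0 then 1 else if k = 1 then -1 else 0) *\<^sub>R bpow B k) sums (R0 o\<^sub>L R0)"
      by simp
    moreover have "(\<lambda>k. (if k = 0 then 1 else if k = 1 then -1 else 0) *\<^sub>R bpow B k) sums
        (\<Sum>k\<in>{0,1}. (if k = 0 then 1 else if k = 1 then -1 else 0) *\<^sub>R bpow B k)"
      by (rule sums_finite) auto
    ultimately have "R0 o\<^sub>L R0 = (\<Sum>k\<in>{0,1::nat}. (if k = 0 then 1 else if k = 1 then -1 else 0) *\<^sub>R bpow B k)"
      using sums_unique2 by blast
    thus ?thesis by simp
  qed
  have R0R0x: "R0 (R0 x) = t *\<^sub>R A x" for x
  proof -
    have "R0 (R0 x) = (R0 o\<^sub>L R0) x" by simp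
    also have "\<dots> = x - fB x" unfolding R0R0 by (simp add: blinfun.diff_left Bapp)
    also have "\<dots> = t *\<^sub>R A x" by (simp add: fB_def)
    finally show ?thesis .
  qed
  have clR0: "clinear (blinfun_apply R0)" unfolding clinear_def
  proof (intro conjI allI)
    fix x y show "R0 (x + y) = R0 x + R0 y" by (rule blinfun.add_right)
  next
    fix c x
    have "R0 (cscale c x) = (\<Sum>k. cscale c (gam k *\<^sub>R P k x))"
      unfolding R0app by (simp add: clinear_cscale[OF clP] cscale_scaleR_commute)
    also have "\<dots> = cscale c (R0 x)"
      unfolding R0app by (rule bounded_linear.suminf[OF bl_cscale sumx, symmetric])
    finally show "R0 (cscale c x) = cscale c (R0 x)" .
  qed
  have cinR0: "cinner (R0 x) y = (\<Sum>k. of_real (gam k) * cinner (P k x) y)" for x y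
    unfolding R0app using bounded_linear.suminf[OF bl_cinner_left[of y] sumx[of x]]
    by (simp add: cinner_scaleR_left)
  have saR0: "sadj (blinfun_apply R0)" unfolding sadj_def
  proof (intro allI)
    fix x y
    have "cinner (R0 x) y = (\<Sum>k. of_real (gam k) * cinner x (P k y))"
      unfolding cinR0 using saP by (simp add: sadj_def)
    also have "\<dots> = cinner x (R0 y)"
      unfolding R0app using bounded_linear.suminf[OF bl_cinner_right[of x] sumx[of y]]
      by (simp add: cinner_scaleR_right)
    finally show "cinner (R0 x) y = cinner x (R0 y)" .
  qed
  have posR0: "0 \<le> Re (cinner (R0 x) x)" for x
  proof -
    have sumc: "summable (\<lambda>k. of_real (gam k) * cinner (P k x) x)"
      using bounded_linear.summable[OF bl_cinner_left[of x] sumx[of x]] by (simp add: cinner_scaleR_left)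
    have "Re (cinner (R0 x) x) = (\<Sum>k. gam k * Re (cinner (P k x) x))"
      unfolding cinR0 using bounded_linear.suminf[OF bounded_linear_Re sumc] by simp
    moreover have "(\<Sum>k. (if k = 0 then 2 * (norm x)^2 else 0) - \<bar>gam k\<bar> * (norm x)^2) \<le> (\<Sum>k. gam k * Re (cinner (P k x) x))"
    proof (rule suminf_le)
      fix k
      show "(if k = 0 then 2 * (norm x)^2 else 0) - \<bar>gam k\<bar> * (norm x)^2 \<le> gam k * Re (cinner (P k x) x)"
      proof (cases "k = 0")
        case True thus ?thesis by (simp add: P0 cinner_self)
      next
        case False
        have "\<bar>Re (cinner (P k x) x)\<bar> \<le> cmod (cinner (P k x) x)" by (rule abs_Re_le_cmod)
        also have "\<dots> \<le> norm (P k x) * norm x" by (rule norm_cinner)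
        also have "\<dots> \<le> norm x * norm x" by (rule mult_right_mono[OF nP]) simp
        finally have h: "\<bar>Re (cinner (P k x) x)\<bar> \<le> (norm x)^2" by (simp add: power2_eq_square)
        have "\<bar>gam k\<bar> * \<bar>Re (cinner (P k x) x)\<bar> \<le> \<bar>gam k\<bar> * (norm x)^2"
          by (rule mult_left_mono[OF h]) simp
        moreover have "- (gam k * Re (cinner (P k x) x)) \<le> \<bar>gam k\<bar> * \<bar>Re (cinner (P k x) x)\<bar>"
          using abs_ge_minus_self[of "gam k * Re (cinner (P k x) x)"] by (simp only: abs_mult)
        ultimately have "- (\<bar>gam k\<bar> * (norm x)^2) \<le> gam k * Re (cinner (P k x) x)" by linarith
        thus ?thesis using False by simp
      qed
    next
      show "summable (\<lambda>k. (if k = 0 then 2 * (norm x)^2 else 0) - \<bar>gam k\<bar> * (norm x)^2)"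
        by (intro summable_diff summable_mult2 summable_abs_gam) (rule summable_finite[of "{0}"], auto)
    next
      show "summable (\<lambda>k. gam k * Re (cinner (P k x) x))"
        using summable_Re[OF sumc] by simp
    qed
    moreover have "(\<Sum>k. (if k = 0 then 2 * (norm x)^2 else 0) - \<bar>gam k\<bar> * (norm x)^2) =
                   2 * (norm x)^2 - (\<Sum>k. \<bar>gam k\<bar>) * (norm x)^2"
    proof -
      have s1: "(\<lambda>k. if k = 0 then 2 * (norm x)^2 else (0::real)) sums (2 * (norm x)^2)"
        using sums_single[of 0 "\<lambda>_. 2 * (norm x)^2"] by simp
      have s2: "(\<lambda>k. \<bar>gam k\<bar> * (norm x)^2) sums ((\<Sum>k. \<bar>gam k\<bar>) * (norm x)^2)"
        by (rule sums_mult2[OF summable_sums[OF summable_abs_gam]])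
      show ?thesis by (rule sums_unique[symmetric]) (rule sums_diff[OF s1 s2])
    qed
    moreover have "(\<Sum>k. \<bar>gam k\<bar>) * (norm x)^2 \<le> 2 * (norm x)^2"
      by (rule mult_right_mono[OF suminf_abs_gam]) simp
    ultimately show ?thesis by linarith
  qed
  have commR0: "Q (R0 x) = R0 (Q x)" if Q: "bounded_linear Q" "\<forall>x. Q (A x) = A (Q x)" for Q x
  proof -
    have lQ: "linear Q" using Q(1) by (rule bounded_linear.linear)
    have "Q (R0 x) = (\<Sum>k. Q (gam k *\<^sub>R P k x))"
      unfolding R0app by (rule bounded_linear.suminf[OF Q(1) sumx])
    also have "\<dots> = R0 (Q x)" unfolding R0app
      by (simp add: linear_scale[OF lQ] commP[OF Q])
    finally show ?thesis .
  qed
  define s where "s = 1 / sqrt t"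
  define R where "R x = s *\<^sub>R R0 x" for x
  have "clinear R" unfolding clinear_def R_def
    by (simp add: clinear_add[OF clR0] clinear_cscale[OF clR0] cscale_scaleR_commute scaleR_add_right)
  moreover have "sadj R" using saR0 unfolding sadj_def R_def
    by (simp add: cinner_scaleR_left cinner_scaleR_right)
  moreover have "cpos R" unfolding cpos_def R_def
  proof (intro allI conjI)
    fix x
    show "Im (cinner (s *\<^sub>R R0 x) x) = 0"
      using sadj_cinner_real[OF saR0, of x] by (simp add: cinner_scaleR_left)
    show "0 \<le> Re (cinner (s *\<^sub>R R0 x) x)"
      using posR0[of x] t by (simp add: cinner_scaleR_left s_def)
  qed
  moreover have "R (R x) = A x" for x
  proof -
    have "R (R x) = s *\<^sub>R s *\<^sub>R R0 (R0 x)" by (simp add: R_def blinfun.scaleR_right)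
    also have "\<dots> = (s * s * t) *\<^sub>R A x" by (simp add: R0R0x)
    also have "s * s * t = 1" using t by (simp add: s_def)
    finally show ?thesis by simp
  qed
  moreover have "\<forall>Q. bounded_linear Q \<longrightarrow> (\<forall>x. Q (A x) = A (Q x)) \<longrightarrow> (\<forall>x. Q (R x) = R (Q x))"
  proof (intro allI impI)
    fix Q x assume Q: "bounded_linear Q" "\<forall>x. Q (A x) = A (Q x)"
    have lQ: "linear Q" using Q(1) by (rule bounded_linear.linear)
    show "Q (R x) = R (Q x)" unfolding R_def by (simp add: linear_scale[OF lQ] commR0[OF Q])
  qed
  ultimately show ?thesis by blast
qed


lemma cis_vderiv:
  "((\<lambda>t. cis (c * t)) has_vector_derivative (of_real c * (\<i> * cis (c * t)))) (at t within S)"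
proof -
  have "((\<lambda>t. c * t) has_derivative (\<lambda>h. c * h)) (at t within S)"
    by (intro derivative_eq_intros) auto
  from has_derivative_cis[OF this]
  show ?thesis unfolding has_vector_derivative_def
    by (simp add: scaleR_conv_of_real mult.commute mult.left_commute)
qed

lemma integral_cis_int:
  fixes k :: int
  shows "((\<lambda>t. cis (of_int k * t)) has_integral (if k = 0 then of_real (2*pi) else 0)) {0..2*pi}"
proof (cases "k = 0")
  case True
  have "((\<lambda>t. 1::complex) has_integral (Henstock_Kurzweil_Integration.content {0..2*pi} *\<^sub>R 1)) {0..2*pi}"
    by (rule has_integral_const_real)
  thus ?thesis using True by (simp add: scaleR_conv_of_real)
next
  case False
  define F where "F t = cis (of_int k * t) / (\<i> * of_int k)" for t
  have "((\<lambda>t. cis (of_int k * t)) has_integral (F (2*pi) - F 0)) {0..2*pi}"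
  proof (rule fundamental_theorem_of_calculus)
    fix t assume "t \<in> {0..2*pi}"
    have "((\<lambda>t. cis (of_int k * t) / (\<i> * of_int k)) has_vector_derivative
           (of_real (of_int k) * (\<i> * cis (of_int k * t))) / (\<i> * of_int k)) (at t within {0..2*pi})"
      by (rule has_vector_derivative_divide[OF cis_vderiv])
    also have "(of_real (of_int k) * (\<i> * cis (of_int k * t))) / (\<i> * of_int k) = cis (of_int k * t)"
      using False by (simp add: field_simps)
    finally show "(F has_vector_derivative cis (of_int k * t)) (at t within {0..2*pi})"
      unfolding F_def .
  qed simp
  moreover have "F (2*pi) - F 0 = 0"
  proof -
    have "cis (of_int k * (2*pi)) = cis (2 * pi * of_int k)" by (simp add: mult.commute)
    also have "\<dots> = 1" by (rule cis_multiple_2pi) simp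
    finally show ?thesis by (simp add: F_def)
  qed
  ultimately show ?thesis using False by simp
qed

lemma mult_cnj_self2: "z * cnj z = (complex_of_real (cmod z))^2"
  by (metis complex_norm_square of_real_power)

lemma parseval_finite_c:
  "((\<lambda>t. complex_of_real ((cmod (\<Sum>n<N. c n * cis (real n * t)))^2)) has_integral
      of_real (2*pi * (\<Sum>n<N. (cmod (c n))^2))) {0..2*pi}"
proof -
  have eq: "complex_of_real ((cmod (\<Sum>n<N. c n * cis (real n * t)))^2) =
        (\<Sum>m<N. \<Sum>n<N. (c m * cnj (c n)) * cis (of_int (int m - int n) * t))" for t
  proof -
    have "complex_of_real ((cmod (\<Sum>n<N. c n * cis (real n * t)))^2) =
          (\<Sum>n<N. c n * cis (real n * t)) * cnj (\<Sum>n<N. c n * cis (real n * t))"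
      by (rule complex_norm_square)
    also have "\<dots> = (\<Sum>m<N. \<Sum>n<N. (c m * cis (real m * t)) * (cnj (c n) * cis (- (real n * t))))"
      by (simp add: sum_product cnj_sum cis_cnj)
    also have "\<dots> = (\<Sum>m<N. \<Sum>n<N. (c m * cnj (c n)) * cis (of_int (int m - int n) * t))"
      by (intro sum.cong refl) (simp add: cis_mult algebra_simps)
    finally show ?thesis .
  qed
  have "((\<lambda>t. \<Sum>m<N. \<Sum>n<N. (c m * cnj (c n)) * cis (of_int (int m - int n) * t)) has_integral
        (\<Sum>m<N. \<Sum>n<N. (c m * cnj (c n)) * (if int m - int n = 0 then of_real (2*pi) else 0))) {0..2*pi}"
    by (intro has_integral_sum finite_lessThan has_integral_mult_right integral_cis_int)
  also have "(\<Sum>m<N. \<Sum>n<N. (c m * cnj (c n)) * (if int m - int n = 0 then of_real (2*pi) else 0)) =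
             (\<Sum>m<N. (c m * cnj (c m)) * of_real (2*pi))"
  proof (rule sum.cong[OF refl])
    fix m assume "m \<in> {..<N}"
    have "(\<Sum>n<N. (c m * cnj (c n)) * (if int m - int n = 0 then of_real (2*pi) else 0)) =
          (\<Sum>n<N. if n = m then (c m * cnj (c n)) * of_real (2*pi) else 0)"
      by (intro sum.cong refl) auto
    also have "\<dots> = (c m * cnj (c m)) * of_real (2*pi)" using \<open>m \<in> {..<N}\<close> by (simp add: sum.delta)
    finally show "(\<Sum>n<N. (c m * cnj (c n)) * (if int m - int n = 0 then of_real (2*pi) else 0)) =
          (c m * cnj (c m)) * of_real (2*pi)" .
  qed
  also have "\<dots> = of_real (2*pi * (\<Sum>n<N. (cmod (c n))^2))"
    by (simp add: mult_cnj_self2 sum_distrib_left mult.commute)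
  finally show ?thesis by (simp only: eq)
qed

lemma parseval_finite:
  "((\<lambda>t. (cmod (\<Sum>n<N. c n * cis (real n * t)))^2) has_integral
      (2*pi * (\<Sum>n<N. (cmod (c n))^2))) {0..2*pi}"
  using has_integral_linear[OF parseval_finite_c[of c N] bounded_linear_Re] by (simp add: o_def)


lemma summable_sq_of_abs:
  assumes "summable (\<lambda>n. u n :: real)" "\<And>n. 0 \<le> u n"
  shows "summable (\<lambda>n. (u n)^2)"
proof -
  have "(\<lambda>n. u n) \<longlonglongrightarrow> 0" by (rule summable_LIMSEQ_zero[OF assms(1)])
  hence "Bseq u" by (rule convergent_imp_Bseq[OF convergentI])
  then obtain M where M: "\<And>n. norm (u n) \<le> M" by (auto simp: Bseq_def)
  show ?thesis
  proof (rule summable_comparison_test'[of "\<lambda>n. M * u n"])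
    show "summable (\<lambda>n. M * u n)" by (rule summable_mult[OF assms(1)])
    fix n show "norm ((u n)^2) \<le> M * u n"
      using M[of n] assms(2)[of n] by (simp add: power2_eq_square mult_right_mono)
  qed
qed

lemma parseval:
  fixes a :: "nat \<Rightarrow> complex" and r :: real
  assumes sums: "\<And>t. (\<lambda>n. a n * (of_real r * cis t)^n) sums g t"
    and abs: "summable (\<lambda>n. cmod (a n) * r^n)" and r: "0 \<le> r"
  shows "summable (\<lambda>n. (cmod (a n))^2 * r^(2*n))"
    and "integral {0..2*pi} (\<lambda>t. (cmod (g t))^2) = 2*pi * (\<Sum>n. (cmod (a n))^2 * r^(2*n))"
proof -
  define c where "c n = a n * of_real (r^n)" for n
  have cm: "cmod (c n) = cmod (a n) * r^n" for n by (simp add: c_def norm_mult r norm_power)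
  have sq: "(cmod (c n))^2 = (cmod (a n))^2 * r^(2*n)" for n
    by (simp add: cm power_mult_distrib power_mult[symmetric] mult.commute)
  show ssum: "summable (\<lambda>n. (cmod (a n))^2 * r^(2*n))"
    using summable_sq_of_abs[OF abs] r by (simp add: sq[symmetric] cm)
  have trm: "a n * (of_real r * cis t)^n = c n * cis (real n * t)" for n t
    by (simp add: c_def power_mult_distrib Complex.DeMoivre)
  define S where "S k t = (\<Sum>n<k. c n * cis (real n * t))" for k t
  define M where "M = (\<Sum>n. cmod (a n) * r^n)"
  have SM: "cmod (S k t) \<le> M" for k t
  proof -
    have "cmod (S k t) \<le> (\<Sum>n<k. cmod (c n * cis (real n * t)))" unfolding S_def by (rule norm_sum)
    also have "\<dots> = (\<Sum>n<k. cmod (a n) * r^n)" by (simp add: norm_mult cm)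
    also have "\<dots> \<le> M" unfolding M_def by (rule sum_le_suminf[OF abs]) (use r in auto)
    finally show ?thesis .
  qed
  have conv: "(\<lambda>k. (cmod (S k t))^2) \<longlonglongrightarrow> (cmod (g t))^2" for t
  proof -
    have "(\<lambda>k. S k t) \<longlonglongrightarrow> g t" using sums[of t] unfolding sums_def S_def by (simp add: trm)
    thus ?thesis by (intro tendsto_intros)
  qed
  have int: "((\<lambda>t. (cmod (S k t))^2) has_integral (2*pi * (\<Sum>n<k. (cmod (c n))^2))) {0..2*pi}" for k
    unfolding S_def by (rule parseval_finite)
  have dc: "(\<lambda>k. integral {0..2*pi} (\<lambda>t. (cmod (S k t))^2)) \<longlonglongrightarrow> integral {0..2*pi} (\<lambda>t. (cmod (g t))^2)"
  proof (rule dominated_convergence(2))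
    show "(\<lambda>t. (cmod (S k t))^2) integrable_on {0..2*pi}" for k using int by blast
    show "(\<lambda>t. M^2) integrable_on {0..2*pi}" by (rule integrable_const_ivl)
    show "norm ((cmod (S k t))^2) \<le> M^2" for k t
      using SM[of k t] by (simp add: power_mono)
    show "(\<lambda>k. (cmod (S k t))^2) \<longlonglongrightarrow> (cmod (g t))^2" for t by (rule conv)
  qed
  moreover have "(\<lambda>k. integral {0..2*pi} (\<lambda>t. (cmod (S k t))^2)) \<longlonglongrightarrow> 2*pi * (\<Sum>n. (cmod (a n))^2 * r^(2*n))"
  proof -
    have eqi: "integral {0..2*pi} (\<lambda>t. (cmod (S k t))^2) = 2*pi * (\<Sum>n<k. (cmod (c n))^2)" for k
      by (rule integral_unique[OF int])
    have "summable (\<lambda>n. (cmod (c n))^2)" using ssum by (simp add: sq)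
    hence "(\<lambda>k. \<Sum>n<k. (cmod (c n))^2) \<longlonglongrightarrow> (\<Sum>n. (cmod (c n))^2)" by (rule summable_LIMSEQ)
    hence "(\<lambda>k. 2*pi * (\<Sum>n<k. (cmod (c n))^2)) \<longlonglongrightarrow> 2*pi * (\<Sum>n. (cmod (c n))^2)"
      by (rule tendsto_mult_left)
    thus ?thesis by (simp only: eqi sq)
  qed
  ultimately show "integral {0..2*pi} (\<lambda>t. (cmod (g t))^2) = 2*pi * (\<Sum>n. (cmod (a n))^2 * r^(2*n))"
    by (rule LIMSEQ_unique)
qed


definition coef :: "(complex \<Rightarrow> complex) \<Rightarrow> nat \<Rightarrow> complex" where
  "coef f n = (deriv ^^ n) f 0 / fact n"

definition fn :: "ell2 \<Rightarrow> complex \<Rightarrow> complex" where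
  "fn x = (\<lambda>z. if z \<in> unit_disc then (\<Sum>n. co x n * z^n) else 0)"

definition cf :: "(complex \<Rightarrow> complex) \<Rightarrow> ell2" where
  "cf f = Abs_ell2 (coef f)"

lemma in_disc_iff: "z \<in> unit_disc \<longleftrightarrow> cmod z < 1" by (simp add: unit_disc_def)

lemma coef_sums:
  assumes "f holomorphic_on unit_disc" "z \<in> unit_disc"
  shows "(\<lambda>n. coef f n * z^n) sums f z"
  using holomorphic_power_series[of f 0 1 z] assms by (simp add: unit_disc_def coef_def)

lemma coef_abs:
  assumes f: "f holomorphic_on unit_disc" and r: "0 \<le> r" "r < 1"
  shows "summable (\<lambda>n. cmod (coef f n) * r^n)"
proof -
  define \<rho> where "\<rho> = (1 + r) / 2"
  have "of_real \<rho> \<in> unit_disc" using r by (simp only: in_disc_iff norm_of_real) (simp add: \<rho>_def)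
  hence "summable (\<lambda>n. coef f n * (of_real \<rho>)^n)" using coef_sums[OF f] by (auto simp: sums_iff)
  moreover have "norm (of_real r :: complex) < norm (of_real \<rho> :: complex)" using r
    by (simp only: norm_of_real) (simp add: \<rho>_def)
  ultimately have "summable (\<lambda>n. norm (coef f n * (of_real r)^n))" by (rule powser_insidea)
  thus ?thesis using r by (simp add: norm_mult norm_power)
qed

lemma int_mean_coef:
  assumes f: "f holomorphic_on unit_disc" and r: "0 \<le> r" "r < 1"
  shows "summable (\<lambda>n. (cmod (coef f n))^2 * r^(2*n))"
    and "int_mean f r = (\<Sum>n. (cmod (coef f n))^2 * r^(2*n))"
proof -
  have sums: "(\<lambda>n. coef f n * (of_real r * cis t)^n) sums f (of_real r * cis t)" for t
    using r by (intro coef_sums[OF f]) (simp add: in_disc_iff norm_mult)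
  note P = parseval[OF sums coef_abs[OF f r] r(1)]
  show "summable (\<lambda>n. (cmod (coef f n))^2 * r^(2*n))" by (rule P(1))
  show "int_mean f r = (\<Sum>n. (cmod (coef f n))^2 * r^(2*n))"
    unfolding int_mean_def P(2) by simp
qed

lemma sup_power_series:
  fixes c :: "nat \<Rightarrow> real"
  assumes c: "\<And>n. 0 \<le> c n" and sr: "\<And>r. 0 \<le> r \<Longrightarrow> r < 1 \<Longrightarrow> summable (\<lambda>n. c n * r^(2*n))"
    and bdd: "bdd_above ((\<lambda>r. \<Sum>n. c n * r^(2*n)) ` {0..<1})"
  shows "summable c" and "(SUP r\<in>{0..<1}. \<Sum>n. c n * r^(2*n)) = (\<Sum>n. c n)"
proof -
  define G where "G r = (\<Sum>n. c n * r^(2*n))" for r :: real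
  define S where "S = (SUP r\<in>{0..<1}. G r)"
  define rk where "rk k = 1 - 1 / (real k + 2)" for k :: nat
  have rk: "0 \<le> rk k" "rk k < 1" for k by (auto simp: rk_def field_simps)
  have rk_lim: "rk \<longlonglongrightarrow> 1"
  proof -
    have "(\<lambda>k. inverse (real (Suc (Suc k)))) \<longlonglongrightarrow> 0"
      by (rule LIMSEQ_Suc[OF LIMSEQ_inverse_real_of_nat])
    hence "(\<lambda>k. 1 / (real k + 2)) \<longlonglongrightarrow> 0" by (simp add: divide_inverse add.commute)
    hence "(\<lambda>k. 1 - 1 / (real k + 2)) \<longlonglongrightarrow> 1 - 0" by (intro tendsto_intros)
    thus ?thesis unfolding rk_def by simp
  qed
  have bddG: "bdd_above (G ` {0..<1})" using bdd by (simp add: G_def)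
  have part: "(\<Sum>n<N. c n) \<le> S" for N
  proof -
    have "(\<lambda>k. \<Sum>n<N. c n * (rk k)^(2*n)) \<longlonglongrightarrow> (\<Sum>n<N. c n * 1^(2*n))"
      by (intro tendsto_intros rk_lim)
    moreover have "(\<Sum>n<N. c n * (rk k)^(2*n)) \<le> S" for k
    proof -
      have "(\<Sum>n<N. c n * (rk k)^(2*n)) \<le> G (rk k)"
        unfolding G_def by (rule sum_le_suminf[OF sr[OF rk]]) (use c rk in auto)
      also have "\<dots> \<le> S" unfolding S_def by (rule cSUP_upper[OF _ bddG]) (use rk in auto)
      finally show ?thesis .
    qed
    ultimately show ?thesis by (intro LIMSEQ_le_const2) auto
  qed
  show sc: "summable c" by (rule summableI_nonneg_bounded[OF c part])
  have "S \<le> (\<Sum>n. c n)" unfolding S_def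
  proof (rule cSUP_least)
    fix r assume "r \<in> {0..<1::real}"
    hence r: "0 \<le> r" "r \<le> 1" by auto
    show "G r \<le> (\<Sum>n. c n)" unfolding G_def
    proof (rule suminf_le[OF _ sr sc])
      fix n show "c n * r^(2*n) \<le> c n" using c[of n] r by (simp add: mult_left_le power_le_one)
    qed (use \<open>r \<in> {0..<1}\<close> in auto)
  qed auto
  moreover have "(\<Sum>n. c n) \<le> S" by (rule suminf_le_const[OF sc part])
  ultimately show "(SUP r\<in>{0..<1}. \<Sum>n. c n * r^(2*n)) = (\<Sum>n. c n)"
    unfolding S_def G_def by simp
qed

lemma hardy2_coef:
  assumes "hardy2 f"
  shows "sqs (coef f)" and "H2_norm f = sqrt (\<Sum>n. (cmod (coef f n))^2)"
proof -
  have f: "f holomorphic_on unit_disc" and bdd: "bdd_above (int_mean f ` {0..<1})"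
    using assms by (auto simp: hardy2_def)
  have im: "int_mean f r = (\<Sum>n. (cmod (coef f n))^2 * r^(2*n))" if "r \<in> {0..<1}" for r
    using int_mean_coef(2)[OF f] that by auto
  have bdd': "bdd_above ((\<lambda>r. \<Sum>n. (cmod (coef f n))^2 * r^(2*n)) ` {0..<1})"
    using bdd by (metis (no_types, lifting) image_cong im)
  note SP = sup_power_series[of "\<lambda>n. (cmod (coef f n))^2", OF _ int_mean_coef(1)[OF f] bdd']
  show "sqs (coef f)" using SP(1) by (simp add: sqs_def)
  have "(SUP r\<in>{0..<1}. int_mean f r) = (SUP r\<in>{0..<1}. \<Sum>n. (cmod (coef f n))^2 * r^(2*n))"
    by (rule SUP_cong) (simp_all add: im)
  thus "H2_norm f = sqrt (\<Sum>n. (cmod (coef f n))^2)" by (simp add: H2_norm_def SP(2))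
qed


lemma fn_abs:
  assumes z: "z \<in> unit_disc"
  shows "summable (\<lambda>n. cmod (co x n * z^n))"
proof (rule summable_comparison_test'[of "\<lambda>n. norm x * (cmod z)^n"])
  show "summable (\<lambda>n. norm x * (cmod z)^n)"
    using z by (intro summable_mult summable_geometric) (simp add: in_disc_iff)
  fix n show "norm (cmod (co x n * z^n)) \<le> norm x * (cmod z)^n"
    by (simp add: norm_mult norm_power mult_right_mono norm_co_le)
qed

lemma fn_summable: "z \<in> unit_disc \<Longrightarrow> summable (\<lambda>n. co x n * z^n)"
  by (rule summable_norm_cancel[OF fn_abs])

lemma fn_sums: "z \<in> unit_disc \<Longrightarrow> (\<lambda>n. co x n * z^n) sums fn x z"
  using fn_summable[of z x] by (simp add: fn_def summable_sums)

lemma fn_holo: "fn x holomorphic_on unit_disc"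
  unfolding unit_disc_def
  by (rule power_series_holomorphic[of 0 1 "co x"]) (use fn_sums in \<open>simp add: unit_disc_def\<close>)

lemma coef_fn: "coef (fn x) n = co x n"
proof -
  define F where "F = Abs_fps (co x)"
  have "(1/2::complex) \<in> unit_disc" by (simp add: in_disc_iff)
  hence "summable (\<lambda>n. fps_nth F n * (1/2::complex)^n)" using fn_summable by (simp add: F_def)
  hence "conv_radius (fps_nth F) \<ge> norm (1/2::complex)" by (rule conv_radius_geI)
  hence rad: "fps_conv_radius F > 0" unfolding fps_conv_radius_def
    by (metis ereal_less(2) less_le_trans norm_divide norm_one norm_numeral zero_less_divide_1_iff zero_less_numeral)
  have "eventually (\<lambda>z. eval_fps F z = fn x z) (nhds 0)"
    unfolding eventually_nhds
  proof (intro exI conjI ballI)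
    show "open unit_disc" "(0::complex) \<in> unit_disc" by (simp_all add: unit_disc_def)
    fix z assume "z \<in> unit_disc"
    thus "eval_fps F z = fn x z" by (simp add: eval_fps_def F_def fn_def)
  qed
  hence "fn x has_fps_expansion F" using rad by (simp add: has_fps_expansion_def)
  from fps_nth_fps_expansion[OF this, of n] show ?thesis by (simp add: F_def coef_def)
qed

lemma fn_hardy2: "hardy2 (fn x)"
  unfolding hardy2_def
proof
  show "fn x holomorphic_on unit_disc" by (rule fn_holo)
  show "bdd_above (int_mean (fn x) ` {0..<1})"
  proof (rule bdd_aboveI2)
    fix r :: real assume r: "r \<in> {0..<1}"
    have "int_mean (fn x) r = (\<Sum>n. (cmod (co x n))^2 * r^(2*n))"
      using int_mean_coef(2)[OF fn_holo, of r] r by (simp add: coef_fn)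
    also have "\<dots> \<le> (\<Sum>n. (cmod (co x n))^2)"
    proof (rule suminf_le)
      fix n show "(cmod (co x n))^2 * r^(2*n) \<le> (cmod (co x n))^2"
        using r by (simp add: mult_left_le power_le_one)
    next
      show "summable (\<lambda>n. (cmod (co x n))^2 * r^(2*n))"
        using int_mean_coef(1)[OF fn_holo, of r] r by (simp add: coef_fn)
    qed (rule summable_co)
    finally show "int_mean (fn x) r \<le> (\<Sum>n. (cmod (co x n))^2)" .
  qed
qed

lemma fn_H2: "fn x \<in> H2"
  unfolding H2_def using fn_hardy2 by (simp add: fn_def)

lemma H2_norm_fn: "H2_norm (fn x) = norm x"
  using hardy2_coef(2)[OF fn_hardy2] by (simp add: coef_fn norm_ell2_co)

lemma cf_fn: "cf (fn x) = x"
proof -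
  have "coef (fn x) = co x" by (simp add: fun_eq_iff coef_fn)
  thus ?thesis by (simp add: cf_def co_inverse)
qed

lemma H2_hardy2: "f \<in> H2 \<Longrightarrow> hardy2 f" by (simp add: H2_def)

lemma co_cf: "f \<in> H2 \<Longrightarrow> co (cf f) = coef f"
  using hardy2_coef(1)[OF H2_hardy2] by (simp add: cf_def Abs_ell2_inverse)

lemma fn_cf: assumes "f \<in> H2" shows "fn (cf f) = f"
proof
  fix z
  show "fn (cf f) z = f z"
  proof (cases "z \<in> unit_disc")
    case True
    have hol: "f holomorphic_on unit_disc" using assms by (simp add: H2_def hardy2_def)
    show ?thesis using coef_sums[OF hol True] True by (simp add: fn_def co_cf[OF assms] sums_iff)
  next
    case False thus ?thesis using assms by (simp add: fn_def H2_def)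
  qed
qed

lemma H2_norm_cf: "f \<in> H2 \<Longrightarrow> H2_norm f = norm (cf f)"
  by (metis H2_norm_fn fn_cf)

lemma fn_lin: "fn (x + cscale c y) = (\<lambda>z. fn x z + c * fn y z)"
proof
  fix z
  show "fn (x + cscale c y) z = fn x z + c * fn y z"
  proof (cases "z \<in> unit_disc")
    case True
    have "(\<lambda>n. co x n * z^n + c * (co y n * z^n)) sums (fn x z + c * fn y z)"
      by (intro sums_add sums_mult fn_sums True)
    moreover have "(\<lambda>n. co (x + cscale c y) n * z^n) sums fn (x + cscale c y) z" by (rule fn_sums[OF True])
    ultimately show ?thesis by (simp add: algebra_simps sums_iff)
  next
    case False thus ?thesis by (simp add: fn_def)
  qed
qed

lemma fn_add: "fn (x + y) = (\<lambda>z. fn x z + fn y z)"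
  using fn_lin[of x 1 y] by simp

lemma fn_zero: "fn 0 = (\<lambda>z. 0)"
  by (simp add: fn_def fun_eq_iff)

lemma fn_cscale: "fn (cscale c y) = (\<lambda>z. c * fn y z)"
  using fn_lin[of 0 c y] by (simp add: fn_zero)

lemma H2_lin:
  assumes "f \<in> H2" "g \<in> H2"
  shows "(\<lambda>z. f z + c * g z) = fn (cf f + cscale c (cf g))"
  using fn_lin[of "cf f" c "cf g"] by (simp add: fn_cf assms)

lemma H2_add: assumes "f \<in> H2" "g \<in> H2"
  shows "(\<lambda>z. f z + g z) \<in> H2" "cf (\<lambda>z. f z + g z) = cf f + cf g"
  using H2_lin[OF assms, of 1] by (simp_all add: fn_H2 cf_fn)

lemma H2_scale: assumes "f \<in> H2"
  shows "(\<lambda>z. c * f z) \<in> H2" "cf (\<lambda>z. c * f z) = cscale c (cf f)"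
  using fn_cscale[of c "cf f"] by (simp_all add: fn_cf assms) (metis fn_H2, metis cf_fn)

lemma polar: "(1/4) * (\<Sum>k<(4::nat). \<i>^k * complex_of_real ((norm (x + cscale (\<i>^k) y))^2)) = cinner x y"
proof -
  have e: "complex_of_real ((norm (x + cscale c y))^2) = cinner x x + cnj c * cinner x y + c * cinner y x + c * cnj c * cinner y y" for c
  proof -
    have "complex_of_real ((norm (x + cscale c y))^2) = cinner (x + cscale c y) (x + cscale c y)"
      by (rule cinner_self[symmetric])
    also have "\<dots> = cinner x x + cnj c * cinner x y + c * cinner y x + c * cnj c * cinner y y"
      by (simp add: cinner_add_left cinner_add_right cinner_scale_left cinner_scale_right algebra_simps)
    finally show ?thesis .
  qed
  show ?thesis
    unfolding e by (simp add: numeral_eq_Suc lessThan_Suc algebra_simps)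
qed

lemma H2_inner_cf:
  assumes "f \<in> H2" "g \<in> H2"
  shows "H2_inner f g = cinner (cf f) (cf g)"
proof -
  have eqk: "H2_norm (\<lambda>z. f z + \<i>^k * g z) = norm (cf f + cscale (\<i>^k) (cf g))" for k
    by (simp add: H2_lin[OF assms] H2_norm_fn)
  have "H2_inner f g = (1/4) * (\<Sum>k<(4::nat). \<i>^k * complex_of_real ((norm (cf f + cscale (\<i>^k) (cf g)))^2))"
    unfolding H2_inner_def by (simp only: eqk)
  thus ?thesis by (simp only: polar)
qed


lemma geo_sqs: assumes "w \<in> unit_disc" shows "sqs (\<lambda>n. cnj (w^n))"
proof -
  have "summable (\<lambda>n. ((cmod w)^2)^n)" using assms
    by (intro summable_geometric) (simp add: in_disc_iff abs_square_less_1)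
  thus ?thesis by (simp add: sqs_def norm_power power_mult[symmetric] mult.commute)
qed

lemma fn_pointwise:
  assumes w: "w \<in> unit_disc"
  shows "cmod (fn x w) \<le> norm x / sqrt (1 - (cmod w)^2)"
proof -
  define g where "g = Abs_ell2 (\<lambda>n. cnj (w^n))"
  have cog: "co g = (\<lambda>n. cnj (w^n))" unfolding g_def using geo_sqs[OF w] by (simp add: Abs_ell2_inverse)
  have w2: "(cmod w)^2 < 1" using w by (simp add: in_disc_iff abs_square_less_1)
  have "fn x w = cinner x g"
    using w by (simp add: fn_def cinner_co cog)
  hence "cmod (fn x w) \<le> norm x * norm g" by (simp add: norm_cinner)
  moreover have "(norm g)^2 = 1 / (1 - (cmod w)^2)"
  proof -
    have "(norm g)^2 = (\<Sum>n. ((cmod w)^2)^n)"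
      by (simp add: norm_sq_co cog norm_power power_mult[symmetric] mult.commute)
    also have "\<dots> = 1 / (1 - (cmod w)^2)" using w2 by (simp add: suminf_geometric)
    finally show ?thesis .
  qed
  hence "norm g = 1 / sqrt (1 - (cmod w)^2)"
    by (metis norm_ge_zero real_sqrt_divide real_sqrt_one real_sqrt_unique)
  ultimately show ?thesis by simp
qed

lemma mult_H2:
  assumes psi: "hardy2 \<psi>" and h: "h holomorphic_on unit_disc" and M: "\<And>z. z \<in> unit_disc \<Longrightarrow> cmod (h z) \<le> M"
  shows "(\<lambda>z. if z \<in> unit_disc then \<psi> z * h z else 0) \<in> H2"
    and "H2_norm (\<lambda>z. if z \<in> unit_disc then \<psi> z * h z else 0) \<le> M * H2_norm \<psi>"
proof -
  define g where "g = (\<lambda>z. if z \<in> unit_disc then \<psi> z * h z else 0)"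
  have M0: "0 \<le> M" using M[of 0] by (simp add: in_disc_iff) (metis norm_ge_zero order_trans)
  have psih: "\<psi> holomorphic_on unit_disc" and bdd: "bdd_above (int_mean \<psi> ` {0..<1})"
    using psi by (auto simp: hardy2_def)
  have hol: "g holomorphic_on unit_disc"
  proof -
    have "(\<lambda>z. \<psi> z * h z) holomorphic_on unit_disc" by (intro holomorphic_intros psih h)
    thus ?thesis by (rule holomorphic_transform) (simp add: g_def)
  qed
  have cont: "continuous_on {0..2*pi} (\<lambda>t. (cmod (f (of_real r * cis t)))^2)"
    if f: "f holomorphic_on unit_disc" and r: "r \<in> {0..<1}" for f r
  proof -
    have "continuous_on unit_disc f" using f by (rule holomorphic_on_imp_continuous_on)
    moreover have "continuous_on {0..2*pi} (\<lambda>t. of_real r * cis t)" by (intro continuous_intros)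
    moreover have "(\<lambda>t. of_real r * cis t) ` {0..2*pi} \<subseteq> unit_disc"
      using r by (auto simp: in_disc_iff norm_mult)
    ultimately have "continuous_on {0..2*pi} (\<lambda>t. f (of_real r * cis t))"
      by (rule continuous_on_compose2)
    thus ?thesis by (intro continuous_intros)
  qed
  have le: "int_mean g r \<le> M^2 * int_mean \<psi> r" if r: "r \<in> {0..<1}" for r
  proof -
    have "integral {0..2*pi} (\<lambda>t. (cmod (g (of_real r * cis t)))^2) \<le>
          integral {0..2*pi} (\<lambda>t. M^2 * (cmod (\<psi> (of_real r * cis t)))^2)"
    proof (rule integral_le)
      show "(\<lambda>t. (cmod (g (of_real r * cis t)))^2) integrable_on {0..2*pi}"
        by (rule integrable_continuous_real[OF cont[OF hol r]])
      show "(\<lambda>t. M^2 * (cmod (\<psi> (of_real r * cis t)))^2) integrable_on {0..2*pi}"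
        by (intro integrable_on_mult_right integrable_continuous_real[OF cont[OF psih r]])
      fix t
      have z: "of_real r * cis t \<in> unit_disc" using r by (simp add: in_disc_iff norm_mult)
      have "cmod (g (of_real r * cis t)) \<le> cmod (\<psi> (of_real r * cis t)) * M"
        using z M[OF z] by (simp add: g_def norm_mult mult_left_mono)
      hence "(cmod (g (of_real r * cis t)))^2 \<le> (cmod (\<psi> (of_real r * cis t)) * M)^2"
        by (intro power_mono) simp_all
      thus "(cmod (g (of_real r * cis t)))^2 \<le> M^2 * (cmod (\<psi> (of_real r * cis t)))^2"
        by (simp add: power_mult_distrib mult.commute)
    qed
    also have "\<dots> = M^2 * integral {0..2*pi} (\<lambda>t. (cmod (\<psi> (of_real r * cis t)))^2)"
      by (rule integral_mult_right)
    finally show ?thesis unfolding int_mean_def by (simp add: divide_right_mono)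
  qed
  have bdd': "bdd_above (int_mean g ` {0..<1})"
  proof -
    from bdd obtain B where B: "\<And>r. r \<in> {0..<1} \<Longrightarrow> int_mean \<psi> r \<le> B" unfolding bdd_above_def by blast
    show ?thesis
    proof (rule bdd_aboveI2)
      fix r assume r: "r \<in> {0..<1::real}"
      show "int_mean g r \<le> M^2 * B" using le[OF r] B[OF r] by (meson mult_left_mono order_trans zero_le_power2)
    qed
  qed
  show "g \<in> H2" unfolding H2_def hardy2_def g_def using hol bdd' by (simp add: g_def)
  have "(SUP r\<in>{0..<1}. int_mean g r) \<le> M^2 * (SUP r\<in>{0..<1}. int_mean \<psi> r)"
  proof (rule cSUP_least)
    fix r assume r: "r \<in> {0..<1::real}"
    have "int_mean \<psi> r \<le> (SUP r\<in>{0..<1}. int_mean \<psi> r)" by (rule cSUP_upper[OF r bdd])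
    thus "int_mean g r \<le> M^2 * (SUP r\<in>{0..<1}. int_mean \<psi> r)"
      using le[OF r] by (meson mult_left_mono order_trans zero_le_power2)
  qed auto
  hence "sqrt (SUP r\<in>{0..<1}. int_mean g r) \<le> sqrt (M^2 * (SUP r\<in>{0..<1}. int_mean \<psi> r))"
    by (rule real_sqrt_le_mono)
  thus "H2_norm g \<le> M * H2_norm \<psi>" unfolding H2_norm_def using M0 by (simp add: real_sqrt_mult)
qed


lemma H2_basis_fn: "H2_basis n = fn (ket n)"
proof
  fix z
  show "H2_basis n z = fn (ket n) z"
  proof (cases "z \<in> unit_disc")
    case True
    have "(\<lambda>m. co (ket n) m * z^m) = (\<lambda>m. if m = n then z^m else 0)" by (auto simp: co_ket fun_eq_iff)
    hence "(\<lambda>m. co (ket n) m * z^m) sums z^n" using sums_single[of n "\<lambda>m. z^m"] by simp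
    thus ?thesis using True by (simp add: H2_basis_def fn_def sums_iff)
  next
    case False thus ?thesis by (simp add: H2_basis_def fn_def)
  qed
qed

lemma H2_norm_nonneg: "hardy2 f \<Longrightarrow> 0 \<le> H2_norm f"
  by (simp add: hardy2_coef(2) ip_nonneg[OF hardy2_coef(1)])

lemma wcomp_add: "wcomp_op \<psi> \<phi> (\<lambda>z. f z + g z) = (\<lambda>z. wcomp_op \<psi> \<phi> f z + wcomp_op \<psi> \<phi> g z)"
  by (simp add: wcomp_op_def fun_eq_iff distrib_left)

lemma wcomp_scale: "wcomp_op \<psi> \<phi> (\<lambda>z. c * f z) = (\<lambda>z. c * wcomp_op \<psi> \<phi> f z)"
  by (simp add: wcomp_op_def fun_eq_iff mult.left_commute)

lemma main_setup:
  assumes psi: "hardy2 \<psi>"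
    and phi_hol: "\<phi> holomorphic_on unit_disc"
    and phi_into: "\<phi> ` unit_disc \<subseteq> unit_disc"
    and s_def: "s = (SUP z\<in>unit_disc. cmod (\<phi> z))"
    and s1: "s < 1"
  shows "\<exists>\<tau> \<sigma> A R. clinear \<tau> \<and> (\<forall>x. wcomp_op \<psi> \<phi> (fn x) \<in> H2 \<and> \<tau> x = cf (wcomp_op \<psi> \<phi> (fn x))) \<and>
     (\<forall>x. norm (\<tau> x) \<le> (H2_norm \<psi> / sqrt (1 - s^2)) * norm x) \<and>
     (\<forall>x y. cinner (\<tau> x) y = cinner x (\<sigma> y)) \<and> clinear \<sigma> \<and>
     (\<forall>x. A x = \<sigma> (\<tau> x)) \<and> clinear A \<and> (\<exists>KA. \<forall>x. norm (A x) \<le> KA * norm x) \<and>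
     clinear R \<and> sadj R \<and> cpos R \<and> (\<forall>x. R (R x) = A x) \<and>
     (\<forall>Q. bounded_linear Q \<longrightarrow> (\<forall>x. Q (A x) = A (Q x)) \<longrightarrow> (\<forall>x. Q (R x) = R (Q x))) \<and>
     (\<forall>n. norm (\<tau> (ket n)) \<le> s^n * H2_norm \<psi>)"
proof -
  have phi1: "cmod (\<phi> z) < 1" if "z \<in> unit_disc" for z
  proof -
    have "\<phi> z \<in> unit_disc" using phi_into that by blast
    thus ?thesis by (simp add: in_disc_iff)
  qed
  have bddphi: "bdd_above ((\<lambda>z. cmod (\<phi> z)) ` unit_disc)"
    by (rule bdd_aboveI2[of _ _ 1]) (use phi1 in \<open>auto intro: less_imp_le\<close>)
  have phis: "cmod (\<phi> z) \<le> s" if "z \<in> unit_disc" for z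
    unfolding s_def by (rule cSUP_upper[OF that bddphi])
  have s0: "0 \<le> s" using phis[of 0] by (simp add: in_disc_iff) (metis norm_ge_zero order_trans)
  define Cs where "Cs = 1 / sqrt (1 - s^2)"
  have s2: "s^2 < 1" using s0 s1 by (simp add: abs_square_less_1)
  have Cs0: "0 \<le> Cs" using s2 by (simp add: Cs_def)
  define T where "T = wcomp_op \<psi> \<phi>"
  have nps: "0 \<le> H2_norm \<psi>" by (rule H2_norm_nonneg[OF psi])
  have Tfn: "T (fn x) \<in> H2 \<and> H2_norm (T (fn x)) \<le> (norm x * Cs) * H2_norm \<psi>" for x
  proof -
    have hol: "(\<lambda>z. fn x (\<phi> z)) holomorphic_on unit_disc"
      using holomorphic_on_compose_gen[OF phi_hol fn_holo phi_into] by (simp add: o_def)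
    have bnd: "cmod (fn x (\<phi> z)) \<le> norm x * Cs" if z: "z \<in> unit_disc" for z
    proof -
      have pz: "\<phi> z \<in> unit_disc" using phi_into z by blast
      have "cmod (fn x (\<phi> z)) \<le> norm x / sqrt (1 - (cmod (\<phi> z))^2)" by (rule fn_pointwise[OF pz])
      also have "\<dots> \<le> norm x / sqrt (1 - s^2)"
      proof (rule divide_left_mono)
        have "(cmod (\<phi> z))^2 \<le> s^2" using phis[OF z] by (intro power_mono) simp_all
        thus "sqrt (1 - s^2) \<le> sqrt (1 - (cmod (\<phi> z))^2)" by simp
        show "0 < sqrt (1 - (cmod (\<phi> z))^2) * sqrt (1 - s^2)"
          using s2 \<open>(cmod (\<phi> z))^2 \<le> s^2\<close> by (intro mult_pos_pos) auto
      qed simp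
      finally show ?thesis by (simp add: Cs_def)
    qed
    have eq: "T (fn x) = (\<lambda>z. if z \<in> unit_disc then \<psi> z * fn x (\<phi> z) else 0)"
      by (simp add: T_def wcomp_op_def)
    show ?thesis unfolding eq using mult_H2[OF psi hol bnd] by simp
  qed
  have TH2: "T f = T (fn (cf f))" if "f \<in> H2" for f using that by (simp add: fn_cf)
  define K where "K = H2_norm \<psi> / sqrt (1 - s^2)"
  have K0: "0 \<le> K" using nps s2 by (simp add: K_def)
  define \<tau> where "\<tau> x = cf (T (fn x))" for x
  have cl\<tau>: "clinear \<tau>" unfolding clinear_def
  proof (intro conjI allI)
    fix x y
    show "\<tau> (x + y) = \<tau> x + \<tau> y"
      unfolding \<tau>_def fn_add T_def wcomp_add using Tfn[of x] Tfn[of y]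
      by (simp add: H2_add T_def)
  next
    fix c x
    show "\<tau> (cscale c x) = cscale c (\<tau> x)"
      unfolding \<tau>_def fn_cscale T_def wcomp_scale using Tfn[of x]
      by (simp add: H2_scale T_def)
  qed
  have n\<tau>: "norm (\<tau> x) \<le> K * norm x" for x
  proof -
    have "norm (\<tau> x) = H2_norm (T (fn x))" using Tfn[of x] by (simp add: \<tau>_def H2_norm_cf)
    also have "\<dots> \<le> (norm x * Cs) * H2_norm \<psi>" using Tfn[of x] by simp
    also have "\<dots> = K * norm x" by (simp add: K_def Cs_def)
    finally show ?thesis .
  qed
  obtain \<sigma> where cl\<sigma>: "clinear \<sigma>" and n\<sigma>: "\<And>y. norm (\<sigma> y) \<le> K * norm y"
    and adj: "\<And>x y. cinner (\<tau> x) y = cinner x (\<sigma> y)"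
    using adjoint_exists[OF cl\<tau> n\<tau>] by blast
  define A where "A x = \<sigma> (\<tau> x)" for x
  have clA: "clinear A" using cl\<tau> cl\<sigma> by (simp add: clinear_def A_def)
  have nA: "norm (A x) \<le> (K * K) * norm x" for x
  proof -
    have "norm (A x) \<le> K * norm (\<tau> x)" by (simp add: A_def n\<sigma>)
    also have "\<dots> \<le> K * (K * norm x)" by (rule mult_left_mono[OF n\<tau> K0])
    finally show ?thesis by simp
  qed
  have cinA: "cinner (A x) y = cinner (\<tau> x) (\<tau> y)" for x y
  proof -
    have "cinner (A x) y = cnj (cinner y (A x))" by (rule cinner_commute)
    also have "cinner y (A x) = cinner (\<tau> y) (\<tau> x)" by (simp add: A_def adj)
    also have "cnj (cinner (\<tau> y) (\<tau> x)) = cinner (\<tau> x) (\<tau> y)" by (simp add: cinner_commute[of "\<tau> x"])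
    finally show ?thesis .
  qed
  have saA: "sadj A" unfolding sadj_def
  proof (intro allI)
    fix x y
    have "cinner (A x) y = cinner (\<tau> x) (\<tau> y)" by (rule cinA)
    also have "\<dots> = cinner x (A y)" by (simp add: adj A_def)
    finally show "cinner (A x) y = cinner x (A y)" .
  qed
  define t where "t = 1 / (K * K + 1)"
  have t0: "t > 0" by (simp add: t_def add_nonneg_pos)
  have tK: "t * (K * K) \<le> 1"
  proof -
    have "0 \<le> K * K" by simp
    hence "K * K \<le> K * K + 1" "0 < K * K + 1" by linarith+
    thus ?thesis by (simp add: t_def divide_le_eq_1)
  qed
  have Bn: "norm (x - t *\<^sub>R A x) \<le> norm x" for x
  proof -
    define n where "n = (norm (\<tau> x))^2"
    have "complex_of_real ((norm (x - t *\<^sub>R A x))^2) = cinner (x - t *\<^sub>R A x) (x - t *\<^sub>R A x)"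
      by (rule cinner_self[symmetric])
    also have "\<dots> = cinner x x - of_real t * cinner (A x) x - of_real t * cinner x (A x) + of_real t * of_real t * cinner (A x) (A x)"
      by (simp add: cinner_diff_left cinner_diff_right cinner_scaleR_left cinner_scaleR_right algebra_simps)
    finally have "(norm (x - t *\<^sub>R A x))^2 = Re (cinner x x - of_real t * cinner (A x) x - of_real t * cinner x (A x) + of_real t * of_real t * cinner (A x) (A x))"
      by (metis Re_complex_of_real)
    also have "\<dots> = (norm x)^2 - 2 * t * n + t * t * (norm (A x))^2"
    proof -
      have "cinner (A x) x = of_real n" by (simp add: cinA cinner_self n_def)
      moreover have "cinner x (A x) = of_real n" using saA \<open>cinner (A x) x = of_real n\<close> by (simp add: sadj_def)
      ultimately show ?thesis by (simp add: cinner_self)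
    qed
    also have "t * t * (norm (A x))^2 \<le> t * t * ((K * K) * n)"
    proof (rule mult_left_mono)
      have "norm (A x) \<le> K * norm (\<tau> x)" by (simp add: A_def n\<sigma>)
      hence "(norm (A x))^2 \<le> (K * norm (\<tau> x))^2" by (intro power_mono) simp_all
      thus "(norm (A x))^2 \<le> (K * K) * n" by (simp add: n_def power_mult_distrib power2_eq_square mult_ac)
    qed simp
    also have "t * t * ((K * K) * n) \<le> t * n"
    proof -
      have "t * t * ((K * K) * n) = t * n * (t * (K * K))" by (simp add: mult_ac)
      also have "\<dots> \<le> t * n * 1" by (rule mult_left_mono[OF tK]) (use t0 in \<open>simp add: n_def\<close>)
      finally show ?thesis by simp
    qed
    finally have h: "(norm (x - t *\<^sub>R A x))^2 \<le> (norm x)^2 - 2 * t * n + t * n" by auto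
    have "0 \<le> t * n" using t0 by (simp add: n_def)
    hence "(norm (x - t *\<^sub>R A x))^2 \<le> (norm x)^2" using h by linarith
    thus ?thesis by (rule power2_le_imp_le) simp
  qed
  obtain R where R: "clinear R" "sadj R" "cpos R" "\<And>x. R (R x) = A x"
    and Rcomm: "\<forall>Q. bounded_linear Q \<longrightarrow> (\<forall>x. Q (A x) = A (Q x)) \<longrightarrow> (\<forall>x. Q (R x) = R (Q x))"
    using sqrt_exists[OF clA nA saA t0 Bn] by blast
  have basis: "norm (\<tau> (ket n)) \<le> s^n * H2_norm \<psi>" for n
  proof -
    have eq: "T (fn (ket n)) = (\<lambda>z. if z \<in> unit_disc then \<psi> z * (\<phi> z)^n else 0)"
      using phi_into by (auto simp: T_def wcomp_op_def H2_basis_fn[symmetric] H2_basis_def fun_eq_iff)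
    have hol: "(\<lambda>z. (\<phi> z)^n) holomorphic_on unit_disc" by (intro holomorphic_intros phi_hol)
    have bnd: "cmod ((\<phi> z)^n) \<le> s^n" if "z \<in> unit_disc" for z
      unfolding norm_power by (rule power_mono[OF phis[OF that]]) simp
    have "norm (\<tau> (ket n)) = H2_norm (T (fn (ket n)))" using Tfn by (simp add: \<tau>_def H2_norm_cf)
    also have "\<dots> \<le> s^n * H2_norm \<psi>" unfolding eq by (rule mult_H2(2)[OF psi hol bnd])
    finally show ?thesis .
  qed
  have ex: "\<exists>KA. \<forall>x. norm (A x) \<le> KA * norm x" using nA by blast
  have Aeq: "\<forall>x. A x = \<sigma> (\<tau> x)" by (simp add: A_def)
  have teq: "\<forall>x. wcomp_op \<psi> \<phi> (fn x) \<in> H2 \<and> \<tau> x = cf (wcomp_op \<psi> \<phi> (fn x))"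
    using Tfn by (simp add: \<tau>_def T_def)
  have nt': "\<forall>x. norm (\<tau> x) \<le> (H2_norm \<psi> / sqrt (1 - s^2)) * norm x" using n\<tau> by (simp add: K_def)
  have adj': "\<forall>x y. cinner (\<tau> x) y = cinner x (\<sigma> y)" using adj by blast
  have R4: "\<forall>x. R (R x) = A x" using R(4) by blast
  have basis': "\<forall>n. norm (\<tau> (ket n)) \<le> s^n * H2_norm \<psi>" using basis by blast
  show ?thesis
    by (rule exI[of _ \<tau>], rule exI[of _ \<sigma>], rule exI[of _ A], rule exI[of _ R])
       (intro conjI cl\<tau> teq nt' adj' cl\<sigma> Aeq clA ex R(1,2,3) R4 Rcomm basis')
qed


lemma H2_inner_fn: "H2_inner (fn a) (fn b) = cinner a b"
  by (simp add: H2_inner_cf fn_H2 cf_fn)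

lemma main_lemma:
  assumes psi: "hardy2 \<psi>"
    and phi_hol: "\<phi> holomorphic_on unit_disc"
    and phi_into: "\<phi> ` unit_disc \<subseteq> unit_disc"
    and s_def: "s = (SUP z\<in>unit_disc. cmod (\<phi> z))"
    and s1: "s < 1"
  shows "trace_class (wcomp_op \<psi> \<phi>) \<and> trace_norm (wcomp_op \<psi> \<phi>) \<le> H2_norm \<psi> / (1 - s)"
proof -
  obtain \<tau> \<sigma> A R where cl\<tau>: "clinear \<tau>"
    and teq: "\<forall>x. wcomp_op \<psi> \<phi> (fn x) \<in> H2 \<and> \<tau> x = cf (wcomp_op \<psi> \<phi> (fn x))"
    and nt: "\<forall>x. norm (\<tau> x) \<le> (H2_norm \<psi> / sqrt (1 - s^2)) * norm x"
    and adj: "\<forall>x y. cinner (\<tau> x) y = cinner x (\<sigma> y)" and cl\<sigma>: "clinear \<sigma>"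
    and Aeq: "\<forall>x. A x = \<sigma> (\<tau> x)" and clA: "clinear A" and exA: "\<exists>KA. \<forall>x. norm (A x) \<le> KA * norm x"
    and R: "clinear R" "sadj R" "cpos R" and RR: "\<forall>x. R (R x) = A x"
    and Rcomm: "\<forall>Q. bounded_linear Q \<longrightarrow> (\<forall>x. Q (A x) = A (Q x)) \<longrightarrow> (\<forall>x. Q (R x) = R (Q x))"
    and basis: "\<forall>n. norm (\<tau> (ket n)) \<le> s^n * H2_norm \<psi>"
    using main_setup[OF psi phi_hol phi_into s_def s1] by blast
  from exA obtain KA where KA: "\<And>x. norm (A x) \<le> KA * norm x" by blast
  define T where "T = wcomp_op \<psi> \<phi>"
  have TH2: "T f \<in> H2" "cf (T f) = \<tau> (cf f)" if "f \<in> H2" for f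
    using teq[rule_format, of "cf f"] that by (simp_all add: T_def fn_cf)
  have s0: "0 \<le> s"
  proof -
    have "0 \<le> norm (\<tau> (ket 0))" by simp
    have "(0::complex) \<in> unit_disc" by (simp add: in_disc_iff)
    hence "cmod (\<phi> 0) \<le> s" unfolding s_def
      by (rule cSUP_upper) (rule bdd_aboveI2[of _ _ 1], use phi_into in \<open>auto simp: in_disc_iff image_subset_iff intro: less_imp_le\<close>)
    thus ?thesis by (metis norm_ge_zero order_trans)
  qed
  define S where "S g = fn (\<sigma> (cf g))" for g
  define P where "P f = fn (R (cf f))" for f
  have adjT: "H2_adjoint T S" unfolding H2_adjoint_def
  proof (intro conjI ballI)
    fix g show "S g \<in> H2" by (simp add: S_def fn_H2)
  next
    fix f g assume f: "f \<in> H2" and g: "g \<in> H2"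
    have "H2_inner (T f) g = cinner (cf (T f)) (cf g)" by (rule H2_inner_cf[OF TH2(1)[OF f] g])
    also have "\<dots> = cinner (cf f) (\<sigma> (cf g))" using adj by (simp add: TH2(2)[OF f])
    also have "\<dots> = H2_inner f (S g)" by (simp add: S_def H2_inner_cf[OF f fn_H2] cf_fn)
    finally show "H2_inner (T f) g = H2_inner f (S g)" .
  qed
  have psq: "H2_pos_sqrt (S \<circ> T) P" unfolding H2_pos_sqrt_def H2_linear_def
  proof (intro conjI ballI allI)
    fix f show "P f \<in> H2" by (simp add: P_def fn_H2)
  next
    fix f g assume f: "f \<in> H2" and g: "g \<in> H2"
    show "P (\<lambda>z. f z + g z) = (\<lambda>z. P f z + P g z)"
      by (simp add: P_def H2_add[OF f g] clinear_add[OF R(1)] fn_add)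
  next
    fix f c assume f: "f \<in> H2"
    show "P (\<lambda>z. c * f z) = (\<lambda>z. c * P f z)"
      by (simp add: P_def H2_scale[OF f] clinear_cscale[OF R(1)] fn_cscale)
  next
    fix f assume f: "f \<in> H2"
    have eq: "H2_inner (P f) f = cinner (R (cf f)) (cf f)"
      by (simp add: P_def H2_inner_cf[OF fn_H2 f] cf_fn)
    show "Im (H2_inner (P f) f) = 0" "0 \<le> Re (H2_inner (P f) f)"
      using R(3) by (simp_all add: eq cpos_def)
  next
    fix f assume f: "f \<in> H2"
    show "P (P f) = (S \<circ> T) f"
      using RR Aeq by (simp add: P_def S_def cf_fn TH2(2)[OF f])
  qed
  define u where "u n = Re (H2_inner (P (H2_basis n)) (H2_basis n))" for n
  have u_eq: "u n = Re (cinner (R (ket n)) (ket n))" for n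
    by (simp add: u_def H2_basis_fn P_def cf_fn H2_inner_fn)
  have normR: "norm (R v) = norm (\<tau> v)" for v
  proof -
    have "complex_of_real ((norm (R v))^2) = cinner (R v) (R v)" by (rule cinner_self[symmetric])
    also have "\<dots> = cinner (R (R v)) v" using R(2) by (simp add: sadj_def)
    also have "\<dots> = cinner (\<sigma> (\<tau> v)) v" using RR Aeq by simp
    also have "\<dots> = cnj (cinner v (\<sigma> (\<tau> v)))" by (rule cinner_commute)
    also have "\<dots> = cnj (cinner (\<tau> v) (\<tau> v))" using adj by simp
    also have "\<dots> = complex_of_real ((norm (\<tau> v))^2)" by (simp add: cinner_self)
    finally have "(norm (R v))^2 = (norm (\<tau> v))^2" using of_real_eq_iff by blast
    thus ?thesis by (simp add: power2_eq_iff_nonneg)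
  qed
  have u_nonneg: "0 \<le> u n" for n using R(3) by (simp add: u_eq cpos_def)
  have u_le: "u n \<le> H2_norm \<psi> * s^n" for n
  proof -
    have "u n \<le> cmod (cinner (R (ket n)) (ket n))" unfolding u_eq by (rule complex_Re_le_cmod)
    also have "\<dots> \<le> norm (R (ket n)) * norm (ket n)" by (rule norm_cinner)
    also have "\<dots> = norm (\<tau> (ket n))" by (simp add: normR)
    also have "\<dots> \<le> H2_norm \<psi> * s^n" using basis by (simp add: mult.commute)
    finally show ?thesis .
  qed
  have geo: "summable (\<lambda>n. H2_norm \<psi> * s^n)" using s0 s1 by (intro summable_mult summable_geometric) simp
  have sum_u: "summable u" by (rule summable_comparison_test'[OF geo]) (simp add: u_nonneg u_le)
  have suminf_u: "suminf u \<le> H2_norm \<psi> / (1 - s)"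
  proof -
    have "suminf u \<le> (\<Sum>n. H2_norm \<psi> * s^n)" by (rule suminf_le[OF u_le sum_u geo])
    also have "\<dots> = H2_norm \<psi> * (1 / (1 - s))" using s0 s1 by (simp add: suminf_mult suminf_geometric)
    finally show ?thesis by simp
  qed
  have bl: "H2_bounded_linear T" unfolding H2_bounded_linear_def H2_linear_def
  proof (intro conjI ballI allI)
    fix f assume "f \<in> H2" thus "T f \<in> H2" by (rule TH2(1))
  next
    fix f g show "T (\<lambda>z. f z + g z) = (\<lambda>z. T f z + T g z)" by (simp add: T_def wcomp_add)
  next
    fix f c show "T (\<lambda>z. c * f z) = (\<lambda>z. c * T f z)" by (simp add: T_def wcomp_scale)
  next
    show "\<exists>K. \<forall>f\<in>H2. H2_norm (T f) \<le> K * H2_norm f"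
    proof (intro exI ballI)
      fix f assume f: "f \<in> H2"
      have "H2_norm (T f) = norm (\<tau> (cf f))" by (simp add: H2_norm_cf[OF TH2(1)[OF f]] TH2(2)[OF f])
      also have "\<dots> \<le> (H2_norm \<psi> / sqrt (1 - s^2)) * norm (cf f)" using nt by blast
      also have "\<dots> = (H2_norm \<psi> / sqrt (1 - s^2)) * H2_norm f" by (simp add: H2_norm_cf[OF f])
      finally show "H2_norm (T f) \<le> (H2_norm \<psi> / sqrt (1 - s^2)) * H2_norm f" .
    qed
  qed
  have ueq: "(\<lambda>n. Re (H2_inner (P (H2_basis n)) (H2_basis n))) = u" by (simp add: u_def fun_eq_iff)
  have tc: "trace_class T" unfolding trace_class_def
  proof (intro conjI exI)
    show "summable (\<lambda>n. Re (H2_inner (P (H2_basis n)) (H2_basis n)))" using sum_u by (simp only: ueq)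
  qed (rule bl adjT psq)+
  have uniq: "Re (H2_inner (P' (H2_basis n)) (H2_basis n)) = u n"
    if S': "H2_adjoint T S'" and P': "H2_pos_sqrt (S' \<circ> T) P'" for S' P' n
  proof -
    define \<sigma>' where "\<sigma>' y = cf (S' (fn y))" for y
    have S'H2: "S' g \<in> H2" if "g \<in> H2" for g using S' that by (simp add: H2_adjoint_def)
    have \<sigma>'eq: "\<sigma>' y = \<sigma> y" for y
    proof (rule cinner_ext)
      fix x
      have "cinner x (\<sigma>' y) = H2_inner (fn x) (S' (fn y))"
        by (simp add: \<sigma>'_def H2_inner_cf[OF fn_H2 S'H2[OF fn_H2]] cf_fn)
      also have "\<dots> = H2_inner (T (fn x)) (fn y)" using S' fn_H2 by (simp add: H2_adjoint_def)
      also have "\<dots> = cinner (\<tau> x) y" by (simp add: H2_inner_cf[OF TH2(1)[OF fn_H2] fn_H2] TH2(2)[OF fn_H2] cf_fn)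
      also have "\<dots> = cinner x (\<sigma> y)" using adj by simp
      finally show "cinner x (\<sigma>' y) = cinner x (\<sigma> y)" .
    qed
    have P'lin: "H2_linear P'" and P'pos: "\<forall>f\<in>H2. Im (H2_inner (P' f) f) = 0 \<and> Re (H2_inner (P' f) f) \<ge> 0"
      and P'sq: "\<forall>f\<in>H2. P' (P' f) = (S' \<circ> T) f" using P' by (simp_all add: H2_pos_sqrt_def)
    have P'H2: "P' f \<in> H2" if "f \<in> H2" for f using P'lin that by (simp add: H2_linear_def)
    define \<rho> where "\<rho> x = cf (P' (fn x))" for x
    have cl\<rho>: "clinear \<rho>" unfolding clinear_def
    proof (intro conjI allI)
      fix x y
      have "P' (fn (x + y)) = (\<lambda>z. P' (fn x) z + P' (fn y) z)"
        using P'lin fn_H2 by (simp add: fn_add H2_linear_def)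
      thus "\<rho> (x + y) = \<rho> x + \<rho> y" by (simp add: \<rho>_def H2_add(2)[OF P'H2[OF fn_H2] P'H2[OF fn_H2]])
    next
      fix c x
      have "P' (fn (cscale c x)) = (\<lambda>z. c * P' (fn x) z)"
        using P'lin fn_H2 by (simp add: fn_cscale H2_linear_def)
      thus "\<rho> (cscale c x) = cscale c (\<rho> x)" by (simp add: \<rho>_def H2_scale(2)[OF P'H2[OF fn_H2]])
    qed
    have cin\<rho>: "cinner (\<rho> x) x = H2_inner (P' (fn x)) (fn x)" for x
      by (simp add: \<rho>_def H2_inner_cf[OF P'H2[OF fn_H2] fn_H2] cf_fn)
    have cp\<rho>: "cpos \<rho>" unfolding cpos_def using P'pos fn_H2 by (simp add: cin\<rho>)
    have sa\<rho>: "sadj \<rho>" by (rule sadj_from_pos[OF cl\<rho>]) (use cp\<rho> in \<open>simp add: cpos_def\<close>)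
    have \<rho>\<rho>: "\<rho> (\<rho> x) = A x" for x
    proof -
      have "\<rho> (\<rho> x) = cf (P' (P' (fn x)))" by (simp add: \<rho>_def fn_cf[OF P'H2[OF fn_H2]])
      also have "\<dots> = cf (S' (T (fn x)))" using P'sq fn_H2 by simp
      also have "\<dots> = \<sigma>' (\<tau> x)"
      proof -
        have "fn (\<tau> x) = T (fn x)"
          using TH2(2)[OF fn_H2[of x]] fn_cf[OF TH2(1)[OF fn_H2[of x]]] by (simp add: cf_fn)
        thus ?thesis by (simp add: \<sigma>'_def)
      qed
      also have "\<dots> = A x" using Aeq by (simp add: \<sigma>'eq)
      finally show ?thesis .
    qed
    have bl\<rho>: "bounded_linear \<rho>"
      by (rule clinear_bl[OF cl\<rho> pos_bounded[OF cl\<rho> sa\<rho> \<rho>\<rho> KA]])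
    have comm\<rho>: "\<forall>x. \<rho> (A x) = A (\<rho> x)" by (simp add: \<rho>\<rho>[symmetric])
    have Rr: "\<rho> (R x) = R (\<rho> x)" for x using Rcomm bl\<rho> comm\<rho> by blast
    have "R x = \<rho> x" for x
      by (rule sqrt_unique[OF R cl\<rho> sa\<rho> cp\<rho>]) (simp_all add: RR \<rho>\<rho> Rr)
    hence "Re (cinner (\<rho> (ket n)) (ket n)) = u n" by (simp add: u_eq)
    thus ?thesis by (simp add: cin\<rho> H2_basis_fn)
  qed
  have tn: "trace_norm T = suminf u" unfolding trace_norm_def
  proof (rule the_equality)
    show "\<exists>S P. H2_adjoint T S \<and> H2_pos_sqrt (S \<circ> T) P \<and>
          (\<lambda>n. Re (H2_inner (P (H2_basis n)) (H2_basis n))) sums suminf u"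
    proof (intro conjI exI)
      show "(\<lambda>n. Re (H2_inner (P (H2_basis n)) (H2_basis n))) sums suminf u"
        using summable_sums[OF sum_u] by (simp only: ueq)
    qed (rule adjT psq)+
  next
    fix x assume "\<exists>S P. H2_adjoint T S \<and> H2_pos_sqrt (S \<circ> T) P \<and>
          (\<lambda>n. Re (H2_inner (P (H2_basis n)) (H2_basis n))) sums x"
    then obtain S' P' where S': "H2_adjoint T S'" and P': "H2_pos_sqrt (S' \<circ> T) P'"
      and sx: "(\<lambda>n. Re (H2_inner (P' (H2_basis n)) (H2_basis n))) sums x" by blast
    have "u sums x" using sx uniq[OF S' P'] by simp
    thus "x = suminf u" by (simp add: sums_iff)
  qed
  show ?thesis using tc tn suminf_u by (simp add: T_def)
qed


lemma hardy2_one: "hardy2 (\<lambda>_. 1)"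
  unfolding hardy2_def
proof
  show "(\<lambda>_. 1) holomorphic_on unit_disc" by (rule holomorphic_on_const)
  have "int_mean (\<lambda>_. 1) ` {0..<1} \<subseteq> {int_mean (\<lambda>_. 1) 0}" by (auto simp: int_mean_def)
  thus "bdd_above (int_mean (\<lambda>_. 1) ` {0..<1})" using bdd_above_mono[of "{int_mean (\<lambda>_. 1) 0}"] by simp
qed

theorem mainTheorem8:
  fixes \<psi> \<phi> :: "complex \<Rightarrow> complex"
  assumes "hardy2 \<psi>"
    and "\<phi> holomorphic_on unit_disc"
    and "\<phi> ` unit_disc \<subseteq> unit_disc"
    and "(SUP z\<in>unit_disc. cmod (\<phi> z)) < 1"
  shows "trace_class (wcomp_op \<psi> \<phi>) \<and> trace_class (comp_op \<phi>) \<and>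
         trace_norm (wcomp_op \<psi> \<phi>) \<le> H2_norm \<psi> / (1 - (SUP z\<in>unit_disc. cmod (\<phi> z)))"
proof -
  define s where "s = (SUP z\<in>unit_disc. cmod (\<phi> z))"
  have s1: "s < 1" using assms(4) by (simp add: s_def)
  have m1: "trace_class (wcomp_op \<psi> \<phi>) \<and> trace_norm (wcomp_op \<psi> \<phi>) \<le> H2_norm \<psi> / (1 - s)"
    by (rule main_lemma[OF assms(1,2,3) s_def s1])
  have m2: "trace_class (wcomp_op (\<lambda>_. 1) \<phi>)"
    using main_lemma[OF hardy2_one assms(2,3) s_def s1] by blast
  have comp: "comp_op \<phi> = wcomp_op (\<lambda>_. 1) \<phi>"
    by (simp add: comp_op_def wcomp_op_def fun_eq_iff)
  show ?thesis using m1 m2 comp by (simp add: s_def)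
qed


end
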